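(* In the setting of the context, let $0<\rho<1$ satisfy $f_r([-1,1])\subset[-\rho,\rho]$ for all $r\in C$, and define \[ E_C=\frac1{1-\rho}\Big(\max_{r\in C}\frac{|f_r^\top(0)|}{1+\sqrt{1-|f_r^\top(0)|^2}}\Big)\Big(\sum_{r\in C}\pi_r\,d_{\mathrm{hyp}}(f_r(0),0)\Big). \] Then for every $n\in\mathbb N$, \[ \Big|\sum_{k=0}^\infty[\mathrm T^k\boldsymbol v]_{\boldsymbol 0}-\sum_{k=0}^{n-1}[\mathrm T^k\boldsymbol v]_{\boldsymbol 0}\Big|\le E_C\,\rho^{n-1}. \]
   Context: Setting (construction of the paper): $X$ finite, $P$ irreducible row-stochastic, $\Sigma=\{x\in X^{\mathbb N_0}:P_{x_nx_{n+1}}>0\}$, $\{A_i\}_{i\in X}\subset\mathrm{GL}_2(\mathbb R)$ projectively uniformly hyperbolic w.r.t. $\Sigma$ (continuous invariant splitting $\mathbb R^2=E^d\oplus E^w$ into lines over $\widehat\Sigma=\{(x_n)_{n\in\mathbb Z}:P_{x_nx_{n+1}}>0\}$, $A_{x_0}E^*(\hat x)=E^*(\widehat\sigma\hat x)$, with $\|A_{x_{n-1}}\cdots A_{x_0}|_{E^w}\|<\|A_{x_{n-1}}\cdots A_{x_0}|_{E^d}\|$ for some $n$). A multicone $\{M_i\}$ is fixed (non-empty proper finite unions of open intervals in $\mathbb{RP}^1$, $\overline{[A_j](M_i)}\subset M_j$ when $P_{ij}>0$), components $M_{i,a}$; $\beta(i,a,j)$ the unique $b$ with $[A_j](\overline{M_{i,a}})\subset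 M_{j,b}$; $R=\{((i,a),(j,b)):P_{ij}>0,\ b=\beta(i,a,j)\}$, $s(r)=(i,a)$, $t(r)=(j,b)$, $\tau(r)=j$; $Q_{r,r'}=P_{\tau(r)\tau(r')}$ if $t(r)=s(r')$ else $0$; $C$ a fixed recurrent class. $L_{i,a}$ maps the projective non-negative cone onto $\overline{M_{i,a}}$; $B_r=\pm L_{t(r)}^{-1}A_{\tau(r)}L_{s(r)}$ entrywise positive. If the period of $Q|_C$ is $d>1$, $C,Q,B$ are replaced by the $d$-step system on words through the cyclic classes ($Q_{c,c'}=Q_{c_{d-1}c'_0}Q_{c'_0c'_1}\cdots Q_{c'_{d-2}c'_{d-1}}$, $B_c=B_{c_{d-1}}\cdots B_{c_0}$), keeping names; $\pi$ is the stationary vector of the resulting irreducible aperiodic $Q|_C$. Möbius data: for $B_r=\begin{pmatrix}a_r&b_r\\c_r&d_r\end{pmatrix}$, $\alpha_r=\frac12(a_r-b_r-c_r+d_r)$, $\beta_r=\frac12(a_r+b_r-c_r-d_r)$, $\gamma_r=\frac12(a_r-b_r+c_r-d_r)$, $\delta_r=\frac12(a_r+b_r+c_r+d_r)$; $f_r(x)=\frac{\alpha_rx+\beta_r}{\gamma_rx+\delta_r}$, $f_r^\top(x)=\frac{\alpha_rx+\gamma_r}{\beta_rx+\delta_r}$, $\ell_r(x)=\mathrm{Log}(\gamma_rx+\delta_r)$; $d_{\mathrm{hyp}}(x,y)=2|\mathrm{artanh}\,x-\mathrm{artanh}\,y|$ on $(-1,1)$. Operators: $b^{(r)}_{k,0}=0$,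 $b^{(r)}_{0,n}=(f_r^\top(0))^n$ ($n\ge1$), $b^{(r)}_{k,n}=\sum_{\ell=1}^{\min\{k,n\}}\binom n\ell\binom{k-1}{\ell-1}(f_r^\top(0))^{n-\ell}(-f_r(0))^{k-\ell}(f_r'(0))^\ell$ ($k,n\ge1$); $v(x;c)\in\ell^\infty(\mathbb N_0)$ has entry $c$ at $0$ and $-(-x)^n/n$ at $n\ge1$; $V$ their span; $(T_ru)_k=\sum_nb^{(r)}_{k,n}u_n$; on $V_C=\bigoplus_{r\in C}V$, $(\mathrm T\boldsymbol u)_{r'}=\sum_r\frac{\pi_rQ_{r,r'}}{\pi_{r'}}T_ru_r$; seed $\boldsymbol v_s=\sum_r\frac{\pi_rQ_{r,s}}{\pi_s}v(f_r(0);\ell_r(0))$; $[\boldsymbol w]_{\boldsymbol 0}=\sum_r\pi_r(w_r)_0$. *)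

theory Defs
  imports "HOL-Analysis.Analysis"
begin

fun Qpow :: "'r set \<Rightarrow> ('r \<Rightarrow> 'r \<Rightarrow> real) \<Rightarrow> nat \<Rightarrow> 'r \<Rightarrow> 'r \<Rightarrow> real" where
  "Qpow C Q 0 r r' = (if r = r' then 1 else 0)"
| "Qpow C Q (Suc n) r r' = (\<Sum>s\<in>C. Qpow C Q n r s * Q s r')"

definition irreducible_on :: "'r set \<Rightarrow> ('r \<Rightarrow> 'r \<Rightarrow> real) \<Rightarrow> bool" where
  "irreducible_on C Q \<longleftrightarrow> (\<forall>r\<in>C. \<forall>r'\<in>C. \<exists>n>0. Qpow C Q n r r' > 0)"

definition aperiodic_on :: "'r set \<Rightarrow> ('r \<Rightarrow> 'r \<Rightarrow> real) \<Rightarrow> bool" where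
  "aperiodic_on C Q \<longleftrightarrow> (\<forall>r\<in>C. Gcd {n. n > 0 \<and> Qpow C Q n r r > 0} = 1)"

definition mob_alpha :: "real^2^2 \<Rightarrow> real" where
  "mob_alpha B = (B$1$1 - B$1$2 - B$2$1 + B$2$2) / 2"
definition mob_beta :: "real^2^2 \<Rightarrow> real" where
  "mob_beta B = (B$1$1 + B$1$2 - B$2$1 - B$2$2) / 2"
definition mob_gamma :: "real^2^2 \<Rightarrow> real" where
  "mob_gamma B = (B$1$1 - B$1$2 + B$2$1 - B$2$2) / 2"
definition mob_delta :: "real^2^2 \<Rightarrow> real" where
  "mob_delta B = (B$1$1 + B$1$2 + B$2$1 + B$2$2) / 2"

definition mob_f :: "real^2^2 \<Rightarrow> real \<Rightarrow> real" where
  "mob_f B x = (mob_alpha B * x + mob_beta B) / (mob_gamma B * x + mob_delta B)"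
definition mob_fT :: "real^2^2 \<Rightarrow> real \<Rightarrow> real" where
  "mob_fT B x = (mob_alpha B * x + mob_gamma B) / (mob_beta B * x + mob_delta B)"
definition mob_ell :: "real^2^2 \<Rightarrow> real \<Rightarrow> real" where
  "mob_ell B x = ln (mob_gamma B * x + mob_delta B)"

definition d_hyp :: "real \<Rightarrow> real \<Rightarrow> real" where
  "d_hyp x y = 2 * \<bar>artanh x - artanh y\<bar>"

definition bcoef :: "real^2^2 \<Rightarrow> nat \<Rightarrow> nat \<Rightarrow> real" where
  "bcoef B k n =
     (if n = 0 then 0
      else if k = 0 then (mob_fT B 0) ^ n
      else (\<Sum>l=1..min k n. real (n choose l) * real ((k - 1) choose (l - 1))
              * (mob_fT B 0) ^ (n - l) * (- mob_f B 0) ^ (k - l)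
              * (deriv (mob_f B) 0) ^ l))"

definition vseq :: "real \<Rightarrow> real \<Rightarrow> nat \<Rightarrow> real" where
  "vseq x c n = (if n = 0 then c else - ((- x) ^ n) / real n)"

definition Top :: "real^2^2 \<Rightarrow> (nat \<Rightarrow> real) \<Rightarrow> nat \<Rightarrow> real" where
  "Top B u k = (\<Sum>n. bcoef B k n * u n)"

definition TT :: "'r set \<Rightarrow> ('r \<Rightarrow> 'r \<Rightarrow> real) \<Rightarrow> ('r \<Rightarrow> real) \<Rightarrow> ('r \<Rightarrow> real^2^2)
                  \<Rightarrow> ('r \<Rightarrow> nat \<Rightarrow> real) \<Rightarrow> 'r \<Rightarrow> nat \<Rightarrow> real" where
  "TT C Q p B u r' = (\<lambda>k. \<Sum>r\<in>C. p r * Q r r' / p r' * Top (B r) (u r) k)"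

definition seed :: "'r set \<Rightarrow> ('r \<Rightarrow> 'r \<Rightarrow> real) \<Rightarrow> ('r \<Rightarrow> real) \<Rightarrow> ('r \<Rightarrow> real^2^2)
                  \<Rightarrow> 'r \<Rightarrow> nat \<Rightarrow> real" where
  "seed C Q p B s = (\<lambda>k. \<Sum>r\<in>C. p r * Q r s / p s
                           * vseq (mob_f (B r) 0) (mob_ell (B r) 0) k)"

definition bracket0 :: "'r set \<Rightarrow> ('r \<Rightarrow> real) \<Rightarrow> ('r \<Rightarrow> nat \<Rightarrow> real) \<Rightarrow> real" where
  "bracket0 C p w = (\<Sum>r\<in>C. p r * w r 0)"

definition E_C :: "'r set \<Rightarrow> ('r \<Rightarrow> real) \<Rightarrow> ('r \<Rightarrow> real^2^2) \<Rightarrow> real \<Rightarrow> real" where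
  "E_C C p B \<rho> = 1 / (1 - \<rho>)
     * Max ((\<lambda>r. \<bar>mob_fT (B r) 0\<bar> / (1 + sqrt (1 - \<bar>mob_fT (B r) 0\<bar>^2))) ` C)
     * (\<Sum>r\<in>C. p r * d_hyp (mob_f (B r) 0) 0)"

end

theory Submission
  imports Defs
begin


lemma negbin:
  fixes y :: real assumes "\<bar>y\<bar> < 1"
  shows "(\<lambda>m. real ((m + j) choose j) * y ^ m) sums (1 / (1 - y) ^ Suc j)"
proof -
  have "\<bar>-y\<bar> < 1" using assms by simp
  from gen_binomial_real[OF this, of "- real (Suc j)"]
  have h: "(\<lambda>m. ((- real (Suc j)) gchoose m) * (-y) ^ m) sums (1 + - y) powr (- real (Suc j))" .
  have e1: "((- real (Suc j)) gchoose m) * (-y) ^ m = real ((m + j) choose j) * y ^ m" for m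
  proof -
    have "((- real (Suc j)) gchoose m) = (-1) ^ m * ((real (Suc j) + real m - 1) gchoose m)"
      by (rule gbinomial_minus)
    also have "real (Suc j) + real m - 1 = real (m + j)" by simp
    also have "(real (m + j) gchoose m) = real ((m + j) choose m)"
      by (simp add: binomial_gbinomial)
    also have "(m + j) choose m = (m + j) choose j"
      by (metis add_diff_cancel_left' binomial_symmetric le_add1)
    finally show ?thesis by (simp add: power_minus[of y] mult_ac)
  qed
  have e2: "(1 + - y) powr (- real (Suc j)) = 1 / (1 - y) ^ Suc j"
  proof -
    have p: "0 < 1 - y" using assms by simp
    have "(1 + - y) powr (- real (Suc j)) = inverse ((1 - y) powr real (Suc j))"
      by (metis powr_minus diff_conv_add_uminus)
    also have "(1 - y) powr real (Suc j) = (1 - y) ^ Suc j" using p by (rule powr_realpow)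
    finally show ?thesis by (simp add: divide_inverse)
  qed
  show ?thesis using h unfolding e1 e2 .
qed


lemma inner:
  fixes a x :: real assumes "\<bar>a * x\<bar> < 1"
  shows "(\<lambda>n. real (n choose Suc j) * a ^ (n - Suc j) * (- ((-x) ^ n) / real n))
          sums ((-1) ^ j * x ^ Suc j / real (Suc j) / (1 + a * x) ^ Suc j)"
proof -
  let ?f = "\<lambda>n. real (n choose Suc j) * a ^ (n - Suc j) * (- ((-x) ^ n) / real n)"
  let ?K = "(-1) ^ j * x ^ Suc j / real (Suc j)"
  have "\<bar>-(a*x)\<bar> < 1" using assms by simp
  from sums_mult[OF negbin[OF this, of j], of ?K]
  have h: "(\<lambda>m. ?K * (real ((m + j) choose j) * (-(a*x)) ^ m)) sums (?K * (1 / (1 - - (a * x)) ^ Suc j))" .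
  have e: "?f (m + Suc j) = ?K * (real ((m + j) choose j) * (-(a*x)) ^ m)" for m
  proof -
    have c: "real ((m + Suc j) choose Suc j) / real (m + Suc j) = real ((m + j) choose j) / real (Suc j)"
    proof -
      have "Suc (m + j) * ((m + j) choose j) = (Suc (m + j) choose Suc j) * Suc j"
        by (rule Suc_times_binomial_eq)
      hence "real (Suc (m + j)) * real ((m + j) choose j) = real (Suc (m + j) choose Suc j) * real (Suc j)"
        by (metis of_nat_mult)
      thus ?thesis by (simp add: field_simps)
    qed
    have "?f (m + Suc j) = (real ((m + Suc j) choose Suc j) / real (m + Suc j)) * a ^ m * (- ((-x) ^ (m + Suc j)))"
      by simp
    also have "\<dots> = (real ((m + j) choose j) / real (Suc j)) * a ^ m * (- ((-x) ^ (m + Suc j)))"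
      by (simp only: c)
    also have "\<dots> = ?K * (real ((m + j) choose j) * (-(a*x)) ^ m)"
      by (simp add: power_add power_minus[of x] power_minus[of "a*x"] power_mult_distrib field_simps)
    finally show ?thesis .
  qed
  have z: "?f i = 0" if "i < Suc j" for i using that by simp
  have "(\<lambda>i. ?f (i + Suc j)) sums (?K * (1 / (1 - - (a * x)) ^ Suc j))"
    using h by (simp only: e)
  hence "?f sums (?K * (1 / (1 - - (a * x)) ^ Suc j))"
    using sums_zero_iff_shift[of "Suc j" ?f, OF z] by simp
  thus ?thesis by (simp add: field_simps)
qed



lemma inner':
  fixes a x :: real assumes "\<bar>a * x\<bar> < 1" and "1 \<le> l"
  shows "(\<lambda>n. real (n choose l) * a ^ (n - l) * (- ((-x) ^ n) / real n))
          sums ((-1) ^ (l - 1) * x ^ l / real l / (1 + a * x) ^ l)"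
proof -
  obtain j where l: "l = Suc j" using assms(2) by (cases l) auto
  show ?thesis using inner[OF assms(1), of j] unfolding l by simp
qed

lemma binom_alg:
  fixes F0 y :: real assumes "1 \<le> k"
  shows "(\<Sum>l=1..k. real ((k - 1) choose (l - 1)) * (-F0) ^ (k - l) * ((-1) ^ (l - 1) * y ^ l / real l))
         = ((-F0) ^ k - (-(F0 + y)) ^ k) / real k"
proof -
  have c: "real ((k - 1) choose (l - 1)) / real l = real (k choose l) / real k" if l1: "1 \<le> l" for l
  proof -
    obtain k' where k: "k = Suc k'" using assms by (cases k) auto
    obtain j where l: "l = Suc j" using l1 by (cases l) auto
    have "Suc k' * (k' choose j) = (Suc k' choose Suc j) * Suc j" by (rule Suc_times_binomial_eq)
    hence "real (Suc k') * real (k' choose j) = real (Suc k' choose Suc j) * real (Suc j)"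
      by (metis of_nat_mult)
    thus ?thesis unfolding k l by (simp add: field_simps)
  qed
  have "(\<Sum>l=1..k. real ((k - 1) choose (l - 1)) * (-F0) ^ (k - l) * ((-1) ^ (l - 1) * y ^ l / real l))
      = (\<Sum>l=1..k. - (real (k choose l) * (-y) ^ l * (-F0) ^ (k - l)) / real k)"
  proof (rule sum.cong[OF refl])
    fix l assume "l \<in> {1..k}"
    hence l1: "1 \<le> l" by simp
    have s: "(-1::real) ^ (l - 1) * y ^ l = - ((-y) ^ l)"
    proof -
      obtain j where l: "l = Suc j" using l1 by (cases l) auto
      show ?thesis unfolding l by (simp add: power_minus[of y])
    qed
    have "real ((k - 1) choose (l - 1)) * (-F0) ^ (k - l) * ((-1) ^ (l - 1) * y ^ l / real l)
        = (real ((k - 1) choose (l - 1)) / real l) * (-F0) ^ (k - l) * ((-1) ^ (l - 1) * y ^ l)"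
      by simp
    also have "\<dots> = - (real (k choose l) * (-y) ^ l * (-F0) ^ (k - l)) / real k"
      unfolding c[OF l1] s by simp
    finally show "real ((k - 1) choose (l - 1)) * (-F0) ^ (k - l) * ((-1) ^ (l - 1) * y ^ l / real l)
        = - (real (k choose l) * (-y) ^ l * (-F0) ^ (k - l)) / real k" .
  qed
  also have "\<dots> = - (\<Sum>l=1..k. real (k choose l) * (-y) ^ l * (-F0) ^ (k - l)) / real k"
    by (simp add: sum_divide_distrib sum_negf)
  also have "(\<Sum>l=1..k. real (k choose l) * (-y) ^ l * (-F0) ^ (k - l))
           = (-y + -F0) ^ k - (-F0) ^ k"
  proof -
    have "(-y + -F0) ^ k = (\<Sum>l\<le>k. real (k choose l) * (-y) ^ l * (-F0) ^ (k - l))"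
      by (rule binomial_ring)
    also have "{..k} = insert 0 {1..k}" by auto
    also have "(\<Sum>l\<in>insert 0 {1..k}. real (k choose l) * (-y) ^ l * (-F0) ^ (k - l))
        = (-F0) ^ k + (\<Sum>l=1..k. real (k choose l) * (-y) ^ l * (-F0) ^ (k - l))"
      by (subst sum.insert) auto
    finally show ?thesis by simp
  qed
  finally show ?thesis by (simp add: field_simps)
qed



definition "ppos (B::real^2^2) \<longleftrightarrow> (\<forall>i j. B $ i $ j > 0)"

lemma ppos_entries:
  assumes "ppos B"
  shows "B$1$1 > 0" "B$1$2 > 0" "B$2$1 > 0" "B$2$2 > 0"
  using assms unfolding ppos_def by auto

lemma lin_pos:
  fixes a c z :: real assumes "a > 0" "c > 0" "\<bar>z\<bar> \<le> 1"
  shows "a * (1 + z) + c * (1 - z) > 0"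
proof (cases "z \<ge> 0")
  case True
  have "a * (1 + z) \<ge> a" using True assms(1) by (simp add: algebra_simps)
  moreover have "c * (1 - z) \<ge> 0" using assms by simp
  ultimately show ?thesis using assms(1) by linarith
next
  case False
  have "c * z \<le> 0" using False assms(2) by (simp add: mult_pos_neg less_imp_le)
  hence "c * (1 - z) \<ge> c" by (simp add: algebra_simps)
  moreover have "a * (1 + z) \<ge> 0" using assms by simp
  ultimately show ?thesis using assms(2) by linarith
qed

lemma raw_decomp:
  fixes a b c d x :: real assumes "d > 0" "c * x + d > 0"
  shows "b / d + ((a * d - b * c) / d^2) * x / (1 + c / d * x) = (a * x + b) / (c * x + d)"
proof -
  have e: "1 + c / d * x = (c * x + d) / d" using assms(1) by (simp add: field_simps)
  have "((a * d - b * c) / d^2) * x / ((c * x + d) / d) = (a * d - b * c) * x / (d * (c * x + d))"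
  proof -
    have n: "d \<noteq> 0" "c * x + d \<noteq> 0" using assms by auto
    have "((a * d - b * c) / d^2) * x / ((c * x + d) / d) = ((a * d - b * c) * x * d) / (d * d * (c * x + d))"
      using n by (simp add: power2_eq_square)
    also have "\<dots> = (a * d - b * c) * x / (d * (c * x + d))"
      using n by (simp add: mult.assoc)
    finally show ?thesis .
  qed
  moreover have "b / d + (a * d - b * c) * x / (d * (c * x + d)) = (a * x + b) / (c * x + d)"
  proof -
    have n: "d \<noteq> 0" "c * x + d \<noteq> 0" using assms by auto
    have "b / d + (a * d - b * c) * x / (d * (c * x + d)) = (b * (c * x + d) + (a * d - b * c) * x) / (d * (c * x + d))"
      using n by (simp add: add_divide_distrib)
    also have "b * (c * x + d) + (a * d - b * c) * x = d * (a * x + b)" by (simp add: algebra_simps)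
    also have "d * (a * x + b) / (d * (c * x + d)) = (a * x + b) / (c * x + d)" using n by simp
    finally show ?thesis .
  qed
  ultimately show ?thesis unfolding e by simp
qed



lemma raw_comb:
  fixes a b c d z :: real
  shows "(a - b + c - d) / 2 * z + (a + b + c + d) / 2 + ((a - b - c + d) / 2 * z + (a + b - c - d) / 2) = a * (1 + z) + b * (1 - z)"
    "(a - b + c - d) / 2 * z + (a + b + c + d) / 2 - ((a - b - c + d) / 2 * z + (a + b - c - d) / 2) = c * (1 + z) + d * (1 - z)"
    "(a + b - c - d) / 2 * z + (a + b + c + d) / 2 + ((a - b - c + d) / 2 * z + (a - b + c - d) / 2) = a * (1 + z) + c * (1 - z)"
    "(a + b - c - d) / 2 * z + (a + b + c + d) / 2 - ((a - b - c + d) / 2 * z + (a - b + c - d) / 2) = b * (1 + z) + d * (1 - z)"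
  by (simp_all add: field_simps)

lemma mob_comb:
  "mob_gamma B * z + mob_delta B + (mob_alpha B * z + mob_beta B) = B$1$1 * (1 + z) + B$1$2 * (1 - z)"
  "mob_gamma B * z + mob_delta B - (mob_alpha B * z + mob_beta B) = B$2$1 * (1 + z) + B$2$2 * (1 - z)"
  "mob_beta B * z + mob_delta B + (mob_alpha B * z + mob_gamma B) = B$1$1 * (1 + z) + B$2$1 * (1 - z)"
  "mob_beta B * z + mob_delta B - (mob_alpha B * z + mob_gamma B) = B$1$2 * (1 + z) + B$2$2 * (1 - z)"
  unfolding mob_alpha_def mob_beta_def mob_gamma_def mob_delta_def
  by (rule raw_comb)+

lemma mob_pos_parts:
  assumes "ppos B" "\<bar>z\<bar> \<le> 1"
  shows "mob_gamma B * z + mob_delta B > 0" "mob_beta B * z + mob_delta B > 0"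
    "\<bar>mob_alpha B * z + mob_beta B\<bar> < mob_gamma B * z + mob_delta B"
    "\<bar>mob_alpha B * z + mob_gamma B\<bar> < mob_beta B * z + mob_delta B"
proof -
  note e = ppos_entries[OF assms(1)]
  have p1: "B$1$1 * (1 + z) + B$1$2 * (1 - z) > 0" by (rule lin_pos[OF e(1) e(2) assms(2)])
  have p2: "B$2$1 * (1 + z) + B$2$2 * (1 - z) > 0" by (rule lin_pos[OF e(3) e(4) assms(2)])
  have p3: "B$1$1 * (1 + z) + B$2$1 * (1 - z) > 0" by (rule lin_pos[OF e(1) e(3) assms(2)])
  have p4: "B$1$2 * (1 + z) + B$2$2 * (1 - z) > 0" by (rule lin_pos[OF e(2) e(4) assms(2)])
  show "mob_gamma B * z + mob_delta B > 0" "\<bar>mob_alpha B * z + mob_beta B\<bar> < mob_gamma B * z + mob_delta B"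
    using p1 p2 mob_comb(1,2)[of B z] by linarith+
  show "mob_beta B * z + mob_delta B > 0" "\<bar>mob_alpha B * z + mob_gamma B\<bar> < mob_beta B * z + mob_delta B"
    using p3 p4 mob_comb(3,4)[of B z] by linarith+
qed

lemma mob_delta_pos: "ppos B \<Longrightarrow> mob_delta B > 0"
  using mob_pos_parts(1)[of B 0] by simp

lemma raw_deriv:
  fixes al be ga de :: real assumes "de \<noteq> 0"
  shows "((\<lambda>x. (al * x + be) / (ga * x + de)) has_field_derivative ((al * de - be * ga) / de^2)) (at 0)"
proof -
  have "((\<lambda>x. (al * x + be) / (ga * x + de)) has_field_derivative
     ((al * (ga * 0 + de) - (al * 0 + be) * ga) / ((ga * 0 + de) * (ga * 0 + de)))) (at 0)"
    using assms by (intro DERIV_divide derivative_eq_intros) auto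
  thus ?thesis by (simp add: power2_eq_square)
qed

lemma deriv_f0:
  assumes "ppos B"
  shows "deriv (mob_f B) 0 = (mob_alpha B * mob_delta B - mob_beta B * mob_gamma B) / (mob_delta B)^2"
proof -
  have d: "mob_delta B \<noteq> 0" using mob_delta_pos[OF assms] by simp
  have "mob_f B = (\<lambda>x. (mob_alpha B * x + mob_beta B) / (mob_gamma B * x + mob_delta B))"
    unfolding mob_f_def[abs_def] ..
  thus ?thesis using DERIV_imp_deriv[OF raw_deriv[OF d]] by simp
qed

lemma f_decomp:
  assumes "ppos B" "\<bar>x\<bar> \<le> 1"
  shows "mob_f B 0 + deriv (mob_f B) 0 * x / (1 + mob_fT B 0 * x) = mob_f B x"
proof -
  have d: "mob_delta B > 0" using mob_delta_pos[OF assms(1)] .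
  have g: "mob_gamma B * x + mob_delta B > 0" using mob_pos_parts(1)[OF assms] .
  show ?thesis unfolding deriv_f0[OF assms(1)] mob_f_def mob_fT_def
    using raw_decomp[OF d g, of "mob_beta B" "mob_alpha B"] by simp
qed

lemma frac_lt1:
  fixes n d :: real assumes "d > 0" "\<bar>n\<bar> < d" shows "\<bar>n / d\<bar> < 1"
proof -
  have "\<bar>n / d\<bar> = \<bar>n\<bar> / d" using assms(1) by (simp add: abs_divide)
  also have "\<dots> < 1" using assms by (simp add: divide_less_eq_1_pos)
  finally show ?thesis .
qed

lemma fT_bound:
  assumes "ppos B" "\<bar>z\<bar> \<le> 1"
  shows "\<bar>mob_fT B z\<bar> < 1"
  unfolding mob_fT_def using mob_pos_parts(2,4)[OF assms] by (intro frac_lt1)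

lemma f_bound:
  assumes "ppos B" "\<bar>z\<bar> \<le> 1"
  shows "\<bar>mob_f B z\<bar> < 1"
  unfolding mob_f_def using mob_pos_parts(1,3)[OF assms] by (intro frac_lt1)

lemma raw_logeq:
  fixes al be ga de x z :: real
  assumes "de \<noteq> 0" "be * z + de \<noteq> 0" "ga * x + de \<noteq> 0"
  shows "(1 + x * ((al * z + ga) / (be * z + de))) * (1 + be / de * z)
       = (1 + (al * x + be) / (ga * x + de) * z) * (1 + x * (ga / de))"
proof -
  have l1: "1 + x * ((al * z + ga) / (be * z + de)) = ((be * z + de) + x * (al * z + ga)) / (be * z + de)"
    using assms(2) by (simp add: field_simps)
  have l2: "1 + be / de * z = (be * z + de) / de" using assms(1) by (simp add: field_simps)
  have r1: "1 + (al * x + be) / (ga * x + de) * z = ((ga * x + de) + (al * x + be) * z) / (ga * x + de)"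
    using assms(3) by (simp add: field_simps)
  have r2: "1 + x * (ga / de) = (ga * x + de) / de" using assms(1) by (simp add: field_simps)
  have "(1 + x * ((al * z + ga) / (be * z + de))) * (1 + be / de * z)
      = ((be * z + de) + x * (al * z + ga)) / (be * z + de) * ((be * z + de) / de)" unfolding l1 l2 ..
  also have "\<dots> = ((be * z + de) + x * (al * z + ga)) / de" using assms(2) by simp
  also have "(be * z + de) + x * (al * z + ga) = (ga * x + de) + (al * x + be) * z"
    by (simp add: algebra_simps)
  also have "((ga * x + de) + (al * x + be) * z) / de
      = ((ga * x + de) + (al * x + be) * z) / (ga * x + de) * ((ga * x + de) / de)" using assms(3) by simp
  also have "\<dots> = (1 + (al * x + be) / (ga * x + de) * z) * (1 + x * (ga / de))" unfolding r1 r2 ..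
  finally show ?thesis .
qed

lemma log_id:
  assumes "ppos B" "\<bar>x\<bar> < 1" "\<bar>z\<bar> < 1"
  shows "ln (1 + x * mob_fT B z) - ln (1 + x * mob_fT B 0)
       = ln (1 + mob_f B x * z) - ln (1 + mob_f B 0 * z)"
proof -
  have pos: "1 + u * v > 0" if "\<bar>u\<bar> < 1" "\<bar>v\<bar> < 1" for u v :: real
  proof -
    have "\<bar>u * v\<bar> < 1" using abs_mult_less[OF that] by (simp add: abs_mult)
    thus ?thesis by linarith
  qed
  have z1: "\<bar>z\<bar> \<le> 1" "\<bar>x\<bar> \<le> 1" "\<bar>0::real\<bar> \<le> 1" using assms by auto
  have p1: "1 + x * mob_fT B z > 0" using pos[OF assms(2) fT_bound[OF assms(1) z1(1)]] .
  have p2: "1 + x * mob_fT B 0 > 0" using pos[OF assms(2) fT_bound[OF assms(1) z1(3)]] .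
  have p3: "1 + mob_f B x * z > 0" using pos[OF f_bound[OF assms(1) z1(2)] assms(3)] .
  have p4: "1 + mob_f B 0 * z > 0" using pos[OF f_bound[OF assms(1) z1(3)] assms(3)] .
  have d: "mob_delta B \<noteq> 0" using mob_delta_pos[OF assms(1)] by simp
  have dz: "mob_beta B * z + mob_delta B \<noteq> 0" "mob_gamma B * x + mob_delta B \<noteq> 0"
    using mob_pos_parts(2)[OF assms(1) z1(1)] mob_pos_parts(1)[OF assms(1) z1(2)] by auto
  have eq: "(1 + x * mob_fT B z) * (1 + mob_f B 0 * z) = (1 + mob_f B x * z) * (1 + x * mob_fT B 0)"
    unfolding mob_f_def mob_fT_def using raw_logeq[OF d dz, of "mob_alpha B"] by simp
  have "ln (1 + x * mob_fT B z) + ln (1 + mob_f B 0 * z) = ln ((1 + x * mob_fT B z) * (1 + mob_f B 0 * z))"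
    using p1 p4 by (simp add: ln_mult)
  also have "\<dots> = ln ((1 + mob_f B x * z) * (1 + x * mob_fT B 0))" unfolding eq ..
  also have "\<dots> = ln (1 + mob_f B x * z) + ln (1 + x * mob_fT B 0)" using p3 p2 by (simp add: ln_mult)
  finally show ?thesis by linarith
qed



lemma Top_vseq_sums:
  assumes B: "ppos B" and x: "\<bar>x\<bar> < 1"
  shows "(\<lambda>n. bcoef B k n * vseq x e n) sums
           (vseq (mob_f B x) (ln (1 + mob_fT B 0 * x)) k - vseq (mob_f B 0) 0 k)"
proof -
  define A where "A = mob_fT B 0"
  define F0 where "F0 = mob_f B 0"
  define Dv where "Dv = deriv (mob_f B) 0"
  have A1: "\<bar>A\<bar> < 1" unfolding A_def using fT_bound[OF B, of 0] by simp
  have Ax: "\<bar>A * x\<bar> < 1"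
  proof -
    have "\<bar>A\<bar> * \<bar>x\<bar> < 1 * 1" using abs_mult_less[OF A1 x] by simp
    thus ?thesis by (simp add: abs_mult)
  qed
  show ?thesis
  proof (cases "k = 0")
    case True
    have e: "bcoef B 0 n * vseq x e n = - ((- (A * x)) ^ n) / real n" for n
      unfolding bcoef_def vseq_def A_def[symmetric]
      by (cases "n = 0") (simp_all add: power_mult_distrib[symmetric])
    have "(\<lambda>n. bcoef B 0 n * vseq x e n) sums ln (1 + A * x)"
      unfolding e by (rule ln_series'[OF Ax])
    thus ?thesis using True unfolding A_def by (simp add: vseq_def)
  next
    case False
    hence k1: "1 \<le> k" by simp
    define c where "c l = real ((k - 1) choose (l - 1)) * (-F0) ^ (k - l) * Dv ^ l" for l
    define t where "t l n = real (n choose l) * A ^ (n - l) * (- ((-x) ^ n) / real n)" for l n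
    have e: "bcoef B k n * vseq x e n = (\<Sum>l=1..k. c l * t l n)" for n
    proof (cases "n = 0")
      case True
      thus ?thesis unfolding bcoef_def t_def by simp
    next
      case False
      have "bcoef B k n = (\<Sum>l=1..min k n. real (n choose l) * real ((k - 1) choose (l - 1))
              * A ^ (n - l) * (-F0) ^ (k - l) * Dv ^ l)"
        unfolding bcoef_def A_def F0_def Dv_def using False k1 by simp
      also have "\<dots> = (\<Sum>l=1..k. real (n choose l) * real ((k - 1) choose (l - 1))
              * A ^ (n - l) * (-F0) ^ (k - l) * Dv ^ l)"
        by (rule sum.mono_neutral_left) auto
      finally have b: "bcoef B k n = \<dots>" .
      have v: "vseq x e n = - ((-x) ^ n) / real n" unfolding vseq_def using False by simp
      show ?thesis unfolding b v sum_distrib_right c_def t_def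
        by (rule sum.cong) (simp_all add: mult_ac)
    qed
    have "(\<lambda>n. \<Sum>l=1..k. c l * t l n) sums
            (\<Sum>l=1..k. c l * ((-1) ^ (l - 1) * x ^ l / real l / (1 + A * x) ^ l))"
    proof (rule sums_sum)
      fix l assume "l \<in> {1..k}"
      hence "1 \<le> l" by simp
      from sums_mult[OF inner'[OF Ax this], of "c l"]
      show "(\<lambda>n. c l * t l n) sums (c l * ((-1) ^ (l - 1) * x ^ l / real l / (1 + A * x) ^ l))"
        unfolding t_def .
    qed
    also have "(\<Sum>l=1..k. c l * ((-1) ^ (l - 1) * x ^ l / real l / (1 + A * x) ^ l))
       = (\<Sum>l=1..k. real ((k - 1) choose (l - 1)) * (-F0) ^ (k - l)
            * ((-1) ^ (l - 1) * (Dv * x / (1 + A * x)) ^ l / real l))"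
      unfolding c_def by (rule sum.cong) (simp_all add: power_divide power_mult_distrib mult_ac)
    also have "\<dots> = ((-F0) ^ k - (-(F0 + Dv * x / (1 + A * x))) ^ k) / real k"
      by (rule binom_alg[OF k1])
    also have "F0 + Dv * x / (1 + A * x) = mob_f B x"
      unfolding F0_def Dv_def A_def using f_decomp[OF B] x by simp
    finally have "(\<lambda>n. bcoef B k n * vseq x e n) sums (((-F0) ^ k - (- mob_f B x) ^ k) / real k)"
      unfolding e .
    moreover have "((-F0) ^ k - (- mob_f B x) ^ k) / real k
        = vseq (mob_f B x) (ln (1 + mob_fT B 0 * x)) k - vseq (mob_f B 0) 0 k"
      unfolding vseq_def F0_def using False by (simp add: diff_divide_distrib)
    ultimately show ?thesis by simp
  qed
qed



inductive good :: "real \<Rightarrow> (nat \<Rightarrow> real) \<Rightarrow> (real \<Rightarrow> real) \<Rightarrow> bool" for \<rho> :: real where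
  g0: "good \<rho> (\<lambda>_. 0) (\<lambda>_. 0)"
| gv: "\<bar>x\<bar> \<le> \<rho> \<Longrightarrow> good \<rho> (vseq x d) (\<lambda>z. ln (1 + x * z))"
| gadd: "good \<rho> u \<Phi> \<Longrightarrow> good \<rho> v \<Psi> \<Longrightarrow> good \<rho> (\<lambda>n. u n + v n) (\<lambda>z. \<Phi> z + \<Psi> z)"
| gscale: "good \<rho> u \<Phi> \<Longrightarrow> good \<rho> (\<lambda>n. c * u n) (\<lambda>z. c * \<Phi> z)"

lemma good_Phi0: "good \<rho> u \<Phi> \<Longrightarrow> \<Phi> 0 = 0"
  by (induction rule: good.induct) auto

lemma good_sum:
  assumes "finite S" "\<forall>i\<in>S. good \<rho> (U i) (F i)"
  shows "good \<rho> (\<lambda>n. \<Sum>i\<in>S. U i n) (\<lambda>z. \<Sum>i\<in>S. F i z)"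
  using assms
proof (induction S rule: finite_induct)
  case empty
  thus ?case using good.g0 by simp
next
  case (insert a S)
  have "good \<rho> (\<lambda>n. U a n + (\<Sum>i\<in>S. U i n)) (\<lambda>z. F a z + (\<Sum>i\<in>S. F i z))"
    using insert by (intro good.gadd) auto
  thus ?case using insert by simp
qed

lemma Top_good:
  assumes "good \<rho> u \<Phi>" and B: "ppos B" and r1: "\<rho> < 1"
    and fb: "\<forall>x. -1 \<le> x \<and> x \<le> 1 \<longrightarrow> \<bar>mob_f B x\<bar> \<le> \<rho>"
  shows "\<exists>u' \<Phi>'. (\<forall>k. (\<lambda>n. bcoef B k n * u n) sums u' k) \<and> good \<rho> u' \<Phi>'
     \<and> u' 0 = \<Phi> (mob_fT B 0) \<and> (\<forall>z. \<bar>z\<bar> < 1 \<longrightarrow> \<Phi>' z = \<Phi> (mob_fT B z) - \<Phi> (mob_fT B 0))"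
  using assms(1)
proof (induction rule: good.induct)
  case g0
  show ?case by (rule exI[of _ "\<lambda>_. 0"], rule exI[of _ "\<lambda>_. 0"]) (simp add: good.g0)
next
  case (gv x d)
  have x1: "\<bar>x\<bar> < 1" using gv r1 by simp
  have "-1 \<le> x \<and> x \<le> 1" using x1 by linarith
  hence fx: "\<bar>mob_f B x\<bar> \<le> \<rho>" using fb by blast
  have f0: "\<bar>mob_f B 0\<bar> \<le> \<rho>" using fb by auto
  let ?u' = "\<lambda>k. vseq (mob_f B x) (ln (1 + mob_fT B 0 * x)) k - vseq (mob_f B 0) 0 k"
  let ?P = "\<lambda>z. ln (1 + mob_f B x * z) + (-1) * ln (1 + mob_f B 0 * z)"
  have g: "good \<rho> (\<lambda>n. vseq (mob_f B x) (ln (1 + mob_fT B 0 * x)) n + (-1) * vseq (mob_f B 0) 0 n) ?P"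
    by (intro good.gadd good.gscale good.gv fx f0)
  have "(\<lambda>n. vseq (mob_f B x) (ln (1 + mob_fT B 0 * x)) n + (-1) * vseq (mob_f B 0) 0 n) = ?u'"
    by auto
  with g have g': "good \<rho> ?u' ?P" by simp
  show ?case
  proof (intro exI conjI allI impI)
    show "(\<lambda>n. bcoef B k n * vseq x d n) sums ?u' k" for k by (rule Top_vseq_sums[OF B x1])
    show "good \<rho> ?u' ?P" by (rule g')
    show "?u' 0 = ln (1 + x * mob_fT B 0)" by (simp add: vseq_def mult.commute)
    fix z :: real assume z: "\<bar>z\<bar> < 1"
    show "?P z = ln (1 + x * mob_fT B z) - ln (1 + x * mob_fT B 0)"
      using log_id[OF B x1 z] by simp
  qed
next
  case (gadd u \<Phi> v \<Psi>)
  from gadd.IH obtain u1 P1 where h1: "\<forall>k. (\<lambda>n. bcoef B k n * u n) sums u1 k" "good \<rho> u1 P1"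
    "u1 0 = \<Phi> (mob_fT B 0)" "\<forall>z. \<bar>z\<bar> < 1 \<longrightarrow> P1 z = \<Phi> (mob_fT B z) - \<Phi> (mob_fT B 0)" by blast
  from gadd.IH obtain u2 P2 where h2: "\<forall>k. (\<lambda>n. bcoef B k n * v n) sums u2 k" "good \<rho> u2 P2"
    "u2 0 = \<Psi> (mob_fT B 0)" "\<forall>z. \<bar>z\<bar> < 1 \<longrightarrow> P2 z = \<Psi> (mob_fT B z) - \<Psi> (mob_fT B 0)" by blast
  show ?case
  proof (intro exI conjI allI impI)
    show "(\<lambda>n. bcoef B k n * (u n + v n)) sums (u1 k + u2 k)" for k
      using sums_add[OF h1(1)[rule_format, of k] h2(1)[rule_format, of k]] by (simp add: distrib_left)
    show "good \<rho> (\<lambda>k. u1 k + u2 k) (\<lambda>z. P1 z + P2 z)" by (rule good.gadd[OF h1(2) h2(2)])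
    show "u1 0 + u2 0 = \<Phi> (mob_fT B 0) + \<Psi> (mob_fT B 0)" using h1(3) h2(3) by simp
    fix z :: real assume "\<bar>z\<bar> < 1"
    thus "P1 z + P2 z = \<Phi> (mob_fT B z) + \<Psi> (mob_fT B z) - (\<Phi> (mob_fT B 0) + \<Psi> (mob_fT B 0))"
      using h1(4) h2(4) by simp
  qed
next
  case (gscale u \<Phi> c)
  from gscale.IH obtain u1 P1 where h1: "\<forall>k. (\<lambda>n. bcoef B k n * u n) sums u1 k" "good \<rho> u1 P1"
    "u1 0 = \<Phi> (mob_fT B 0)" "\<forall>z. \<bar>z\<bar> < 1 \<longrightarrow> P1 z = \<Phi> (mob_fT B z) - \<Phi> (mob_fT B 0)" by blast
  show ?case
  proof (intro exI conjI allI impI)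
    show "(\<lambda>n. bcoef B k n * (c * u n)) sums (c * u1 k)" for k
      using sums_mult[OF h1(1)[rule_format, of k], of c] by (simp add: mult_ac)
    show "good \<rho> (\<lambda>k. c * u1 k) (\<lambda>z. c * P1 z)" by (rule good.gscale[OF h1(2)])
    show "c * u1 0 = c * \<Phi> (mob_fT B 0)" using h1(3) by simp
    fix z :: real assume "\<bar>z\<bar> < 1"
    thus "c * P1 z = c * \<Phi> (mob_fT B z) - c * \<Phi> (mob_fT B 0)"
      using h1(4) by (simp add: right_diff_distrib)
  qed
qed



definition Qc :: "real \<Rightarrow> real \<Rightarrow> real \<Rightarrow> real \<Rightarrow> real" where
  "Qc u1 u2 v1 v2 = \<bar>u1 * v2 - u2 * v1\<bar> / (sqrt (u1 * v2) + sqrt (u2 * v1))^2"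

lemma CS2:
  fixes x1 x2 y1 y2 :: real
  assumes "x1 \<ge> 0" "x2 \<ge> 0" "y1 \<ge> 0" "y2 \<ge> 0"
  shows "sqrt (x1 * y2) + sqrt (x2 * y1) \<le> sqrt ((x1 + x2) * (y1 + y2))"
proof (rule real_le_rsqrt)
  have p: "x1 * y2 \<ge> 0" "x2 * y1 \<ge> 0" "x1 * y1 \<ge> 0" "x2 * y2 \<ge> 0" using assms by auto
  have m: "sqrt (x1 * y2) * sqrt (x2 * y1) = sqrt (x1 * y1) * sqrt (x2 * y2)"
    by (simp add: real_sqrt_mult[symmetric] mult_ac)
  have am: "2 * (sqrt (x1 * y1) * sqrt (x2 * y2)) \<le> x1 * y1 + x2 * y2"
  proof -
    have "0 \<le> (sqrt (x1 * y1) - sqrt (x2 * y2))^2" by simp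
    also have "\<dots> = x1 * y1 + x2 * y2 - 2 * (sqrt (x1 * y1) * sqrt (x2 * y2))"
      using p by (simp add: power2_diff)
    finally show ?thesis by simp
  qed
  have "(sqrt (x1 * y2) + sqrt (x2 * y1))^2 = x1 * y2 + x2 * y1 + 2 * (sqrt (x1 * y2) * sqrt (x2 * y1))"
    using p by (simp add: power2_sum)
  also have "\<dots> \<le> x1 * y2 + x2 * y1 + (x1 * y1 + x2 * y2)" using am m by simp
  also have "\<dots> = (x1 + x2) * (y1 + y2)" by (simp add: algebra_simps)
  finally show "(sqrt (x1 * y2) + sqrt (x2 * y1))^2 \<le> (x1 + x2) * (y1 + y2)" .
qed

lemma Qc_scale:
  fixes l m u1 u2 v1 v2 :: real
  assumes "l > 0" "m > 0" "u1 \<ge> 0" "u2 \<ge> 0" "v1 \<ge> 0" "v2 \<ge> 0"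
  shows "Qc (l * u1) (l * u2) (m * v1) (m * v2) = Qc u1 u2 v1 v2"
proof -
  have s1: "sqrt (l * u1 * (m * v2)) = sqrt (l * m) * sqrt (u1 * v2)"
    by (simp add: real_sqrt_mult[symmetric] mult_ac)
  have s2: "sqrt (l * u2 * (m * v1)) = sqrt (l * m) * sqrt (u2 * v1)"
    by (simp add: real_sqrt_mult[symmetric] mult_ac)
  have n: "l * u1 * (m * v2) - l * u2 * (m * v1) = (l * m) * (u1 * v2 - u2 * v1)"
    by (simp add: algebra_simps)
  have d: "(sqrt (l * m) * sqrt (u1 * v2) + sqrt (l * m) * sqrt (u2 * v1))^2
      = (l * m) * (sqrt (u1 * v2) + sqrt (u2 * v1))^2"
    using assms by (simp add: power_mult_distrib distrib_left[symmetric])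
  have lm: "l * m > 0" using assms by simp
  show ?thesis unfolding Qc_def s1 s2 n d using lm
    using assms(1,2) by (simp add: abs_mult abs_of_pos[OF assms(1)] abs_of_pos[OF assms(2)])
qed

lemma Qc_contr:
  fixes m11 m12 m21 m22 u1 u2 v1 v2 :: real
  assumes m: "m11 > 0" "m12 > 0" "m21 > 0" "m22 > 0"
    and u: "u1 > 0" "u2 > 0" "v1 > 0" "v2 > 0"
  shows "Qc (m11 * u1 + m12 * u2) (m21 * u1 + m22 * u2) (m11 * v1 + m12 * v2) (m21 * v1 + m22 * v2)
    \<le> \<bar>sqrt (m11 * m22) - sqrt (m12 * m21)\<bar> / (sqrt (m11 * m22) + sqrt (m12 * m21)) * Qc u1 u2 v1 v2"
proof -
  define X where "X = sqrt (m11 * m22)"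
  define Y where "Y = sqrt (m12 * m21)"
  define A where "A = sqrt (u1 * v2)"
  define C where "C = sqrt (u2 * v1)"
  define N where "N = u1 * v2 - u2 * v1"
  have X0: "X > 0" "Y > 0" "A > 0" "C > 0" unfolding X_def Y_def A_def C_def using m u by auto
  have XX: "X^2 = m11 * m22" "Y^2 = m12 * m21" unfolding X_def Y_def using m by auto
  have num: "(m11 * u1 + m12 * u2) * (m21 * v1 + m22 * v2) - (m21 * u1 + m22 * u2) * (m11 * v1 + m12 * v2)
      = (X^2 - Y^2) * N" unfolding XX N_def by (simp add: algebra_simps)
  have cs1: "X * A + Y * C \<le> sqrt ((m11 * u1 + m12 * u2) * (m21 * v1 + m22 * v2))"
  proof -
    have "sqrt (m11 * u1 * (m22 * v2)) + sqrt (m12 * u2 * (m21 * v1))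
        \<le> sqrt ((m11 * u1 + m12 * u2) * (m21 * v1 + m22 * v2))"
      by (rule CS2) (use m u in auto)
    moreover have "sqrt (m11 * u1 * (m22 * v2)) = X * A" "sqrt (m12 * u2 * (m21 * v1)) = Y * C"
      unfolding X_def Y_def A_def C_def by (simp_all add: real_sqrt_mult[symmetric] mult_ac)
    ultimately show ?thesis by simp
  qed
  have cs2: "Y * A + X * C \<le> sqrt ((m21 * u1 + m22 * u2) * (m11 * v1 + m12 * v2))"
  proof -
    have "sqrt (m21 * u1 * (m12 * v2)) + sqrt (m22 * u2 * (m11 * v1))
        \<le> sqrt ((m21 * u1 + m22 * u2) * (m11 * v1 + m12 * v2))"
      by (rule CS2) (use m u in auto)
    moreover have "sqrt (m21 * u1 * (m12 * v2)) = Y * A" "sqrt (m22 * u2 * (m11 * v1)) = X * C"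
      unfolding X_def Y_def A_def C_def by (simp_all add: real_sqrt_mult[symmetric] mult_ac)
    ultimately show ?thesis by simp
  qed
  define S where "S = sqrt ((m11 * u1 + m12 * u2) * (m21 * v1 + m22 * v2))
                    + sqrt ((m21 * u1 + m22 * u2) * (m11 * v1 + m12 * v2))"
  have Sge: "(X + Y) * (A + C) \<le> S" unfolding S_def using cs1 cs2 by (simp add: algebra_simps)
  have p: "0 < (X + Y) * (A + C)" using X0 by simp
  have Sq: "((X + Y) * (A + C))^2 \<le> S^2" using Sge p by (intro power_mono) auto
  have lhs: "Qc (m11 * u1 + m12 * u2) (m21 * u1 + m22 * u2) (m11 * v1 + m12 * v2) (m21 * v1 + m22 * v2)
      = \<bar>X^2 - Y^2\<bar> * \<bar>N\<bar> / S^2"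
    unfolding Qc_def num S_def by (simp add: abs_mult)
  also have "\<dots> \<le> \<bar>X^2 - Y^2\<bar> * \<bar>N\<bar> / ((X + Y) * (A + C))^2"
  proof -
    have S0: "S > 0" using Sge p by linarith
    have "0 < S^2 * ((X + Y) * (A + C))^2" using S0 p by (intro mult_pos_pos) auto
    thus ?thesis using Sq by (intro divide_left_mono) auto
  qed
  also have "\<dots> = \<bar>X - Y\<bar> / (X + Y) * (\<bar>N\<bar> / (A + C)^2)"
  proof -
    have "X^2 - Y^2 = (X - Y) * (X + Y)" by (simp add: power2_eq_square algebra_simps)
    hence e1: "\<bar>X^2 - Y^2\<bar> = \<bar>X - Y\<bar> * (X + Y)" using X0 by (simp add: abs_mult)
    have e2: "((X + Y) * (A + C))^2 = (X + Y) * ((X + Y) * (A + C)^2)"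
      by (simp add: power2_eq_square mult_ac)
    have xy: "X + Y \<noteq> 0" using X0 by simp
    show ?thesis unfolding e1 e2 using xy by (simp add: mult_ac)
  qed
  also have "\<bar>N\<bar> / (A + C)^2 = Qc u1 u2 v1 v2" unfolding Qc_def N_def A_def C_def ..
  finally show ?thesis unfolding X_def Y_def .
qed

lemma rho_sqrt:
  fixes a b c d \<rho> :: real
  assumes "a > 0" "b > 0" "c > 0" "d > 0" "\<rho> \<le> 1"
    and "\<bar>a - c\<bar> \<le> \<rho> * (a + c)" "\<bar>b - d\<bar> \<le> \<rho> * (b + d)"
  shows "\<bar>sqrt (a * d) - sqrt (b * c)\<bar> \<le> \<rho> * (sqrt (a * d) + sqrt (b * c))"
proof -
  have "0 \<le> \<rho> * (a + c)" using assms(6) abs_ge_zero[of "a - c"] by linarith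
  hence "\<rho> \<ge> 0" using assms(1,3) by (simp add: zero_le_mult_iff)
  hence r0: "0 \<le> 1 - \<rho>" "0 \<le> 1 + \<rho>" using assms(5) by auto
  have key: "sqrt (x * y) * (1 - \<rho>) \<le> sqrt (z * w) * (1 + \<rho>)"
    if "x > 0" "y > 0" "z > 0" "w > 0" "x * (1 - \<rho>) \<le> z * (1 + \<rho>)" "y * (1 - \<rho>) \<le> w * (1 + \<rho>)"
    for x y z w :: real
  proof -
    have "(x * (1 - \<rho>)) * (y * (1 - \<rho>)) \<le> (z * (1 + \<rho>)) * (w * (1 + \<rho>))"
      by (rule mult_mono[OF that(5) that(6)]) (use that r0 in auto)
    hence "(x * y) * (1 - \<rho>)^2 \<le> (z * w) * (1 + \<rho>)^2" by (simp add: power2_eq_square mult_ac)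
    hence "sqrt ((x * y) * (1 - \<rho>)^2) \<le> sqrt ((z * w) * (1 + \<rho>)^2)" by (rule real_sqrt_le_mono)
    thus ?thesis using r0 by (simp add: real_sqrt_mult)
  qed
  have "sqrt (a * d) * (1 - \<rho>) \<le> sqrt (c * b) * (1 + \<rho>)"
    using assms by (intro key) (auto simp: abs_le_iff algebra_simps)
  moreover have "sqrt (c * b) * (1 - \<rho>) \<le> sqrt (a * d) * (1 + \<rho>)"
    using assms by (intro key) (auto simp: abs_le_iff algebra_simps)
  ultimately show ?thesis by (simp add: mult.commute[of c b] abs_le_iff algebra_simps)
qed



definition qz :: "real \<Rightarrow> real \<Rightarrow> real" where
  "qz z1 z2 = Qc (1 + z1) (1 - z1) (1 + z2) (1 - z2)"

lemma Qc_nonneg: "Qc u1 u2 v1 v2 \<ge> 0"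
  unfolding Qc_def by simp

lemma fT_parts:
  assumes "ppos B" "\<bar>z\<bar> \<le> 1"
  shows "1 + mob_fT B z = (1 / (mob_beta B * z + mob_delta B)) * (B$1$1 * (1 + z) + B$2$1 * (1 - z))"
        "1 - mob_fT B z = (1 / (mob_beta B * z + mob_delta B)) * (B$1$2 * (1 + z) + B$2$2 * (1 - z))"
proof -
  have D: "mob_beta B * z + mob_delta B > 0" using mob_pos_parts(2)[OF assms] .
  have e1: "1 + mob_fT B z = (mob_beta B * z + mob_delta B + (mob_alpha B * z + mob_gamma B)) / (mob_beta B * z + mob_delta B)"
    unfolding mob_fT_def using D by (simp add: add_divide_distrib)
  have e2: "1 - mob_fT B z = (mob_beta B * z + mob_delta B - (mob_alpha B * z + mob_gamma B)) / (mob_beta B * z + mob_delta B)"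
    unfolding mob_fT_def using D by (simp add: diff_divide_distrib)
  show "1 + mob_fT B z = (1 / (mob_beta B * z + mob_delta B)) * (B$1$1 * (1 + z) + B$2$1 * (1 - z))"
    unfolding e1 mob_comb(3) by simp
  show "1 - mob_fT B z = (1 / (mob_beta B * z + mob_delta B)) * (B$1$2 * (1 + z) + B$2$2 * (1 - z))"
    unfolding e2 mob_comb(4) by simp
qed

lemma f_hyp_lin:
  assumes B: "ppos B" and fb: "\<forall>x. -1 \<le> x \<and> x \<le> 1 \<longrightarrow> \<bar>mob_f B x\<bar> \<le> \<rho>"
  shows "\<bar>B$1$1 - B$2$1\<bar> \<le> \<rho> * (B$1$1 + B$2$1)" "\<bar>B$1$2 - B$2$2\<bar> \<le> \<rho> * (B$1$2 + B$2$2)"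
proof -
  note e = ppos_entries[OF B]
  have c1: "mob_gamma B * 1 + mob_delta B + (mob_alpha B * 1 + mob_beta B) = B$1$1 * 2"
    "mob_gamma B * 1 + mob_delta B - (mob_alpha B * 1 + mob_beta B) = B$2$1 * 2"
    using mob_comb(1,2)[of B 1] by simp_all
  hence P: "mob_alpha B * 1 + mob_beta B = B$1$1 - B$2$1" and D: "mob_gamma B * 1 + mob_delta B = B$1$1 + B$2$1"
    by linarith+
  have "\<bar>mob_f B 1\<bar> \<le> \<rho>" using fb by simp
  hence "\<bar>(B$1$1 - B$2$1) / (B$1$1 + B$2$1)\<bar> \<le> \<rho>" unfolding mob_f_def P D .
  moreover have "B$1$1 + B$2$1 > 0" using e by simp
  ultimately show "\<bar>B$1$1 - B$2$1\<bar> \<le> \<rho> * (B$1$1 + B$2$1)"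
    by (simp add: abs_divide divide_le_eq)
  have c2: "mob_gamma B * (-1) + mob_delta B + (mob_alpha B * (-1) + mob_beta B) = B$1$2 * 2"
    "mob_gamma B * (-1) + mob_delta B - (mob_alpha B * (-1) + mob_beta B) = B$2$2 * 2"
    using mob_comb(1,2)[of B "-1"] by simp_all
  hence P2: "mob_alpha B * (-1) + mob_beta B = B$1$2 - B$2$2" and D2: "mob_gamma B * (-1) + mob_delta B = B$1$2 + B$2$2"
    by linarith+
  have "\<bar>mob_f B (-1)\<bar> \<le> \<rho>" using fb by simp
  hence "\<bar>(B$1$2 - B$2$2) / (B$1$2 + B$2$2)\<bar> \<le> \<rho>" unfolding mob_f_def P2 D2 .
  moreover have "B$1$2 + B$2$2 > 0" using e by simp
  ultimately show "\<bar>B$1$2 - B$2$2\<bar> \<le> \<rho> * (B$1$2 + B$2$2)"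
    by (simp add: abs_divide divide_le_eq)
qed

lemma qz_contr:
  assumes B: "ppos B" and fb: "\<forall>x. -1 \<le> x \<and> x \<le> 1 \<longrightarrow> \<bar>mob_f B x\<bar> \<le> \<rho>" and r: "\<rho> \<le> 1"
    and z: "\<bar>z1\<bar> < 1" "\<bar>z2\<bar> < 1"
  shows "qz (mob_fT B z1) (mob_fT B z2) \<le> \<rho> * qz z1 z2"
proof -
  note e = ppos_entries[OF B]
  have z': "\<bar>z1\<bar> \<le> 1" "\<bar>z2\<bar> \<le> 1" using z by auto
  have D1: "1 / (mob_beta B * z1 + mob_delta B) > 0" using mob_pos_parts(2)[OF B z'(1)] by simp
  have D2: "1 / (mob_beta B * z2 + mob_delta B) > 0" using mob_pos_parts(2)[OF B z'(2)] by simp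
  have u: "1 + z1 > 0" "1 - z1 > 0" "1 + z2 > 0" "1 - z2 > 0" using z by auto
  have nn: "B$1$1 * (1 + z1) + B$2$1 * (1 - z1) \<ge> 0" "B$1$2 * (1 + z1) + B$2$2 * (1 - z1) \<ge> 0"
     "B$1$1 * (1 + z2) + B$2$1 * (1 - z2) \<ge> 0" "B$1$2 * (1 + z2) + B$2$2 * (1 - z2) \<ge> 0"
    using e u by (auto intro!: add_nonneg_nonneg mult_nonneg_nonneg)
  have "qz (mob_fT B z1) (mob_fT B z2)
     = Qc (B$1$1 * (1 + z1) + B$2$1 * (1 - z1)) (B$1$2 * (1 + z1) + B$2$2 * (1 - z1))
          (B$1$1 * (1 + z2) + B$2$1 * (1 - z2)) (B$1$2 * (1 + z2) + B$2$2 * (1 - z2))"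
    unfolding qz_def fT_parts[OF B z'(1)] fT_parts[OF B z'(2)]
    by (rule Qc_scale[OF D1 D2 nn])
  also have "\<dots> \<le> \<bar>sqrt (B$1$1 * B$2$2) - sqrt (B$2$1 * B$1$2)\<bar> / (sqrt (B$1$1 * B$2$2) + sqrt (B$2$1 * B$1$2))
        * Qc (1 + z1) (1 - z1) (1 + z2) (1 - z2)"
    by (rule Qc_contr) (use e u in auto)
  also have "\<dots> \<le> \<rho> * Qc (1 + z1) (1 - z1) (1 + z2) (1 - z2)"
  proof (rule mult_right_mono[OF _ Qc_nonneg])
    have "\<bar>sqrt (B$1$1 * B$2$2) - sqrt (B$1$2 * B$2$1)\<bar> \<le> \<rho> * (sqrt (B$1$1 * B$2$2) + sqrt (B$1$2 * B$2$1))"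
      by (rule rho_sqrt[OF e(1) e(2) e(3) e(4) r f_hyp_lin[OF B fb]])
    moreover have "sqrt (B$1$1 * B$2$2) + sqrt (B$1$2 * B$2$1) > 0" using e by (simp add: add_pos_pos)
    ultimately show "\<bar>sqrt (B$1$1 * B$2$2) - sqrt (B$2$1 * B$1$2)\<bar> / (sqrt (B$1$1 * B$2$2) + sqrt (B$2$1 * B$1$2)) \<le> \<rho>"
      by (simp add: mult.commute[of "B$2$1"] divide_le_eq)
  qed
  finally show ?thesis unfolding qz_def .
qed

lemma qz_at0:
  assumes "\<bar>a\<bar> < 1"
  shows "qz a 0 = \<bar>a\<bar> / (1 + sqrt (1 - a^2))"
proof -
  have p: "1 + a > 0" "1 - a > 0" using assms by auto
  have "(sqrt (1 + a) + sqrt (1 - a))^2 = (1 + a) + (1 - a) + 2 * (sqrt (1 + a) * sqrt (1 - a))"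
    using p by (simp add: power2_sum)
  also have "sqrt (1 + a) * sqrt (1 - a) = sqrt (1 - a^2)"
    by (simp add: real_sqrt_mult[symmetric] power2_eq_square algebra_simps)
  finally have d: "(sqrt (1 + a) + sqrt (1 - a))^2 = 2 * (1 + sqrt (1 - a^2))" by simp
  have "qz a 0 = 2 * \<bar>a\<bar> / (sqrt (1 + a) + sqrt (1 - a))^2" unfolding qz_def Qc_def by (simp add: abs_mult)
  also have "\<dots> = \<bar>a\<bar> / (1 + sqrt (1 - a^2))" unfolding d by (subst mult_divide_mult_cancel_left) auto
  finally show ?thesis .
qed

lemma lip_deriv:
  fixes g g' :: "real \<Rightarrow> real"
  assumes d: "\<And>x. (g has_real_derivative g' x) (at x)" and b: "\<And>x. \<bar>g' x\<bar> \<le> K"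
  shows "\<bar>g b - g a\<bar> \<le> K * \<bar>b - a\<bar>"
proof -
  have main: "\<bar>g y - g x\<bar> \<le> K * \<bar>y - x\<bar>" if "x < y" for x y
  proof -
    have "\<exists>t. x < t \<and> t < y \<and> g y - g x = (y - x) * g' t" by (rule MVT2[OF that d])
    then obtain t where "g y - g x = (y - x) * g' t" by blast
    hence "\<bar>g y - g x\<bar> = \<bar>y - x\<bar> * \<bar>g' t\<bar>" by (simp add: abs_mult)
    also have "\<dots> \<le> \<bar>y - x\<bar> * K" using b by (intro mult_left_mono) auto
    finally show ?thesis by (simp add: mult.commute)
  qed
  show ?thesis
  proof (cases a b rule: linorder_cases)
    case less thus ?thesis using main by blast
  next
    case equal thus ?thesis by simp
  next
    case greater thus ?thesis using main[OF greater] by (simp add: abs_minus_commute)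
  qed
qed



lemma gder_bound:
  fixes u1 u2 v1 v2 e :: real
  assumes u: "u1 > 0" "u2 > 0" "v1 > 0" "v2 > 0" and e: "e > 0"
  shows "\<bar>e * u1 / (e * u1 + u2) - e * v1 / (e * v1 + v2)\<bar> \<le> Qc u1 u2 v1 v2"
proof -
  define P1 where "P1 = e * u1 + u2"
  define P2 where "P2 = e * v1 + v2"
  define S where "S = sqrt (u1 * v2) + sqrt (u2 * v1)"
  have P: "P1 > 0" "P2 > 0" unfolding P1_def P2_def using u e by (auto intro!: add_pos_pos mult_pos_pos)
  have S0: "S > 0" unfolding S_def using u by (simp add: add_pos_pos)
  have eq: "e * u1 / P1 - e * v1 / P2 = e * (u1 * v2 - u2 * v1) / (P1 * P2)"
  proof -
    have "e * u1 / P1 - e * v1 / P2 = (e * u1 * P2 - e * v1 * P1) / (P1 * P2)"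
      using P by (simp add: diff_divide_distrib)
    also have "e * u1 * P2 - e * v1 * P1 = e * (u1 * v2 - u2 * v1)"
      unfolding P1_def P2_def by (simp add: algebra_simps)
    finally show ?thesis .
  qed
  have cs: "sqrt (e * u1 * v2) + sqrt (u2 * (e * v1)) \<le> sqrt (P1 * P2)"
    unfolding P1_def P2_def by (rule CS2) (use u e in auto)
  have l: "sqrt (e * u1 * v2) + sqrt (u2 * (e * v1)) = sqrt e * S"
    unfolding S_def by (simp add: real_sqrt_mult mult_ac distrib_left)
  have "sqrt e * S \<le> sqrt (P1 * P2)" using cs l by simp
  hence "(sqrt e * S)^2 \<le> (sqrt (P1 * P2))^2" using S0 e by (intro power_mono) auto
  hence eS: "e * S^2 \<le> P1 * P2" using P e by (simp add: power_mult_distrib)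
  have "\<bar>e * u1 / P1 - e * v1 / P2\<bar> = e * \<bar>u1 * v2 - u2 * v1\<bar> / (P1 * P2)"
    unfolding eq using e P by (simp add: abs_mult abs_divide)
  also have "\<dots> \<le> e * \<bar>u1 * v2 - u2 * v1\<bar> / (e * S^2)"
    using eS e S0 P by (intro divide_left_mono) (auto intro!: mult_pos_pos)
  also have "\<dots> = Qc u1 u2 v1 v2" unfolding Qc_def S_def using e by simp
  finally show ?thesis unfolding P1_def P2_def .
qed

lemma lnh: "(X::real) > 0 \<Longrightarrow> Y > 0 \<Longrightarrow> ln (2 * X / Y) = ln 2 + ln X - ln Y"
  by (simp add: ln_div ln_mult)

lemma log_ineq:
  fixes f0 z1 z2 :: real
  assumes f: "\<bar>f0\<bar> < 1" and z: "\<bar>z1\<bar> < 1" "\<bar>z2\<bar> < 1"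
  shows "\<bar>ln (1 + f0 * z1) - ln (1 + f0 * z2)\<bar> \<le> d_hyp f0 0 * qz z1 z2"
proof -
  define u1 where "u1 = 1 + z1"
  define u2 where "u2 = 1 - z1"
  define v1 where "v1 = 1 + z2"
  define v2 where "v2 = 1 - z2"
  have u: "u1 > 0" "u2 > 0" "v1 > 0" "v2 > 0" unfolding u1_def u2_def v1_def v2_def using z by auto
  define g where "g \<mu> = ln (exp \<mu> * u1 + u2) - ln (exp \<mu> * v1 + v2)" for \<mu>
  define g' where "g' \<mu> = exp \<mu> * u1 / (exp \<mu> * u1 + u2) - exp \<mu> * v1 / (exp \<mu> * v1 + v2)" for \<mu>
  have d: "(g has_real_derivative g' \<mu>) (at \<mu>)" for \<mu>
  proof -
    have p: "exp \<mu> * u1 + u2 > 0" "exp \<mu> * v1 + v2 > 0" using u by (auto intro: add_pos_pos)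
    show ?thesis unfolding g_def[abs_def] g'_def
      by (rule derivative_eq_intros refl | use p in simp)+
  qed
  have b: "\<bar>g' \<mu>\<bar> \<le> Qc u1 u2 v1 v2" for \<mu>
    unfolding g'_def by (rule gder_bound[OF u]) simp
  define m0 where "m0 = ln ((1 + f0) / (1 - f0))"
  have fp: "1 + f0 > 0" "1 - f0 > 0" using f by auto
  have em: "exp m0 = (1 + f0) / (1 - f0)" unfolding m0_def using fp by simp
  have g0: "g 0 = 0" unfolding g_def u1_def u2_def v1_def v2_def by simp
  have gm: "g m0 = ln (1 + f0 * z1) - ln (1 + f0 * z2)"
  proof -
    have a1: "exp m0 * u1 + u2 = 2 * (1 + f0 * z1) / (1 - f0)"
      unfolding em u1_def u2_def using fp by (simp add: field_simps)
    have a2: "exp m0 * v1 + v2 = 2 * (1 + f0 * z2) / (1 - f0)"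
      unfolding em v1_def v2_def using fp by (simp add: field_simps)
    have pz: "1 + f0 * z1 > 0" "1 + f0 * z2 > 0"
    proof -
      have "\<bar>f0 * z1\<bar> < 1" "\<bar>f0 * z2\<bar> < 1"
        using abs_mult_less[OF f z(1)] abs_mult_less[OF f z(2)] by (simp_all add: abs_mult)
      thus "1 + f0 * z1 > 0" "1 + f0 * z2 > 0" by linarith+
    qed
    have "g m0 = ln (2 * (1 + f0 * z1) / (1 - f0)) - ln (2 * (1 + f0 * z2) / (1 - f0))"
      unfolding g_def a1 a2 ..
    also have "\<dots> = (ln 2 + ln (1 + f0 * z1) - ln (1 - f0)) - (ln 2 + ln (1 + f0 * z2) - ln (1 - f0))"
      using lnh[OF pz(1) fp(2)] lnh[OF pz(2) fp(2)] by simp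
    finally show ?thesis by simp
  qed
  have "\<bar>g m0 - g 0\<bar> \<le> Qc u1 u2 v1 v2 * \<bar>m0 - 0\<bar>" by (rule lip_deriv[OF d b])
  moreover have "\<bar>m0\<bar> = d_hyp f0 0" unfolding d_hyp_def m0_def artanh_def by simp
  ultimately show ?thesis unfolding gm g0 qz_def u1_def u2_def v1_def v2_def by (simp add: mult.commute)
qed



lemma swap_sum:
  fixes C :: "'r set" and Q :: "'r \<Rightarrow> 'r \<Rightarrow> real" and p :: "'r \<Rightarrow> real"
  assumes "finite C" "\<forall>r\<in>C. (\<Sum>r'\<in>C. Q r r') = 1" "\<forall>r\<in>C. p r > 0"
  shows "(\<Sum>s\<in>C. p s * (\<Sum>r\<in>C. p r * Q r s / p s * h r)) = (\<Sum>r\<in>C. p r * h r)"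
proof -
  have "(\<Sum>s\<in>C. p s * (\<Sum>r\<in>C. p r * Q r s / p s * h r)) = (\<Sum>s\<in>C. \<Sum>r\<in>C. p r * h r * Q r s)"
  proof (rule sum.cong[OF refl])
    fix s assume s: "s \<in> C"
    have ps: "p s \<noteq> 0" using assms(3) s by auto
    show "p s * (\<Sum>r\<in>C. p r * Q r s / p s * h r) = (\<Sum>r\<in>C. p r * h r * Q r s)"
      unfolding sum_distrib_left using ps by (intro sum.cong) (simp_all add: field_simps)
  qed
  also have "\<dots> = (\<Sum>r\<in>C. \<Sum>s\<in>C. p r * h r * Q r s)" by (rule sum.swap)
  also have "\<dots> = (\<Sum>r\<in>C. p r * h r)"
    using assms(2) by (intro sum.cong) (simp_all add: sum_distrib_left[symmetric])
  finally show ?thesis .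
qed

lemma TT_step:
  fixes C :: "'r set" and Q :: "'r \<Rightarrow> 'r \<Rightarrow> real" and p :: "'r \<Rightarrow> real" and B :: "'r \<Rightarrow> real^2^2"
  assumes fin: "finite C" and Bp: "\<forall>r\<in>C. ppos (B r)" and r1: "\<rho> < 1"
    and fb: "\<forall>r\<in>C. \<forall>x. -1 \<le> x \<and> x \<le> 1 \<longrightarrow> \<bar>mob_f (B r) x\<bar> \<le> \<rho>"
    and gU: "\<forall>r\<in>C. good \<rho> (U r) (\<Phi> r)"
  shows "\<exists>\<Phi>'. \<forall>s\<in>C. good \<rho> (TT C Q p B U s) (\<Phi>' s)
     \<and> (\<forall>z. \<bar>z\<bar> < 1 \<longrightarrow> \<Phi>' s z = (\<Sum>r\<in>C. p r * Q r s / p s * (\<Phi> r (mob_fT (B r) z) - \<Phi> r (mob_fT (B r) 0))))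
     \<and> TT C Q p B U s 0 = (\<Sum>r\<in>C. p r * Q r s / p s * \<Phi> r (mob_fT (B r) 0))"
proof -
  have "\<forall>r\<in>C. \<exists>u' \<Phi>'. (\<forall>k. (\<lambda>n. bcoef (B r) k n * U r n) sums u' k) \<and> good \<rho> u' \<Phi>'
     \<and> u' 0 = \<Phi> r (mob_fT (B r) 0) \<and> (\<forall>z. \<bar>z\<bar> < 1 \<longrightarrow> \<Phi>' z = \<Phi> r (mob_fT (B r) z) - \<Phi> r (mob_fT (B r) 0))"
  proof
    fix r assume r: "r \<in> C"
    show "\<exists>u' \<Phi>'. (\<forall>k. (\<lambda>n. bcoef (B r) k n * U r n) sums u' k) \<and> good \<rho> u' \<Phi>'
     \<and> u' 0 = \<Phi> r (mob_fT (B r) 0) \<and> (\<forall>z. \<bar>z\<bar> < 1 \<longrightarrow> \<Phi>' z = \<Phi> r (mob_fT (B r) z) - \<Phi> r (mob_fT (B r) 0))"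
      by (rule Top_good) (use gU Bp r1 fb r in auto)
  qed
  from bchoice[OF this] obtain uu where "\<forall>r\<in>C. \<exists>\<Phi>'. (\<forall>k. (\<lambda>n. bcoef (B r) k n * U r n) sums uu r k) \<and> good \<rho> (uu r) \<Phi>'
     \<and> uu r 0 = \<Phi> r (mob_fT (B r) 0) \<and> (\<forall>z. \<bar>z\<bar> < 1 \<longrightarrow> \<Phi>' z = \<Phi> r (mob_fT (B r) z) - \<Phi> r (mob_fT (B r) 0))"
    by blast
  from bchoice[OF this] obtain PP where H: "\<forall>r\<in>C. (\<forall>k. (\<lambda>n. bcoef (B r) k n * U r n) sums uu r k) \<and> good \<rho> (uu r) (PP r)
     \<and> uu r 0 = \<Phi> r (mob_fT (B r) 0) \<and> (\<forall>z. \<bar>z\<bar> < 1 \<longrightarrow> PP r z = \<Phi> r (mob_fT (B r) z) - \<Phi> r (mob_fT (B r) 0))"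
    by blast
  have Top: "Top (B r) (U r) = uu r" if r: "r \<in> C" for r
  proof
    fix k
    show "Top (B r) (U r) k = uu r k" unfolding Top_def using H r by (metis sums_unique)
  qed
  have TTe: "TT C Q p B U s = (\<lambda>k. \<Sum>r\<in>C. p r * Q r s / p s * uu r k)" for s
    unfolding TT_def using Top by (intro ext sum.cong) auto
  show ?thesis
  proof (rule exI[of _ "\<lambda>s z. \<Sum>r\<in>C. p r * Q r s / p s * PP r z"], intro ballI conjI allI impI)
    fix s assume s: "s \<in> C"
    show "good \<rho> (TT C Q p B U s) (\<lambda>z. \<Sum>r\<in>C. p r * Q r s / p s * PP r z)"
      unfolding TTe using fin
    proof (intro good_sum ballI)
      fix r assume "r \<in> C"
      hence "good \<rho> (uu r) (PP r)" using H by blast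
      thus "good \<rho> (\<lambda>n. p r * Q r s / p s * uu r n) (\<lambda>z. p r * Q r s / p s * PP r z)"
        by (rule good.gscale)
    qed
    show "TT C Q p B U s 0 = (\<Sum>r\<in>C. p r * Q r s / p s * \<Phi> r (mob_fT (B r) 0))"
      unfolding TTe using H by (intro sum.cong) auto
    fix z :: real assume "\<bar>z\<bar> < 1"
    thus "(\<Sum>r\<in>C. p r * Q r s / p s * PP r z) = (\<Sum>r\<in>C. p r * Q r s / p s * (\<Phi> r (mob_fT (B r) z) - \<Phi> r (mob_fT (B r) 0)))"
      using H by (intro sum.cong) auto
  qed
qed



lemma inv_step:
  fixes C :: "'r set" and Q :: "'r \<Rightarrow> 'r \<Rightarrow> real" and p :: "'r \<Rightarrow> real" and B :: "'r \<Rightarrow> real^2^2"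
  assumes fin: "finite C" and Bp: "\<forall>r\<in>C. ppos (B r)" and r0: "0 < \<rho>" and r1: "\<rho> < 1"
    and fb: "\<forall>r\<in>C. \<forall>x. -1 \<le> x \<and> x \<le> 1 \<longrightarrow> \<bar>mob_f (B r) x\<bar> \<le> \<rho>"
    and Qn: "\<forall>r\<in>C. \<forall>r'\<in>C. Q r r' \<ge> 0" and Qr: "\<forall>r\<in>C. (\<Sum>r'\<in>C. Q r r') = 1"
    and pp: "\<forall>r\<in>C. p r > 0"
  shows "\<exists>\<Phi> W. (\<forall>s\<in>C. good \<rho> ((TT C Q p B ^^ k) (seed C Q p B) s) (\<Phi> s) \<and> W s \<ge> 0
            \<and> (\<forall>z1 z2. \<bar>z1\<bar> < 1 \<longrightarrow> \<bar>z2\<bar> < 1 \<longrightarrow> \<bar>\<Phi> s z1 - \<Phi> s z2\<bar> \<le> W s * \<rho> ^ k * qz z1 z2))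
          \<and> (\<Sum>s\<in>C. p s * W s) = (\<Sum>r\<in>C. p r * d_hyp (mob_f (B r) 0) 0)"
proof (induction k)
  case 0
  have w0: "p r * Q r s / p s \<ge> 0" if "r \<in> C" "s \<in> C" for r s
  proof -
    have "p r > 0" "Q r s \<ge> 0" "p s > 0" using pp Qn that by auto
    thus ?thesis by simp
  qed
  have dh: "d_hyp x 0 \<ge> 0" for x unfolding d_hyp_def by simp
  have f0: "\<bar>mob_f (B r) 0\<bar> \<le> \<rho>" if "r \<in> C" for r using fb that by simp
  have f01: "\<bar>mob_f (B r) 0\<bar> < 1" if "r \<in> C" for r using f0[OF that] r1 by simp
  show ?case
  proof (intro exI conjI ballI allI impI)
    fix s assume s: "s \<in> C"
    show "good \<rho> ((TT C Q p B ^^ 0) (seed C Q p B) s)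
        (\<lambda>z. \<Sum>r\<in>C. p r * Q r s / p s * ln (1 + mob_f (B r) 0 * z))"
      unfolding funpow_0 seed_def using fin
    proof (intro good_sum ballI)
      fix r assume "r \<in> C"
      thus "good \<rho> (\<lambda>n. p r * Q r s / p s * vseq (mob_f (B r) 0) (mob_ell (B r) 0) n)
                  (\<lambda>z. p r * Q r s / p s * ln (1 + mob_f (B r) 0 * z))"
        by (intro good.gscale good.gv f0)
    qed
    show "(\<Sum>r\<in>C. p r * Q r s / p s * d_hyp (mob_f (B r) 0) 0) \<ge> 0"
      using w0 dh s by (intro sum_nonneg mult_nonneg_nonneg) auto
    fix z1 z2 :: real assume z: "\<bar>z1\<bar> < 1" "\<bar>z2\<bar> < 1"
    have "\<bar>(\<Sum>r\<in>C. p r * Q r s / p s * ln (1 + mob_f (B r) 0 * z1))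
          - (\<Sum>r\<in>C. p r * Q r s / p s * ln (1 + mob_f (B r) 0 * z2))\<bar>
        = \<bar>\<Sum>r\<in>C. p r * Q r s / p s * (ln (1 + mob_f (B r) 0 * z1) - ln (1 + mob_f (B r) 0 * z2))\<bar>"
      by (simp add: sum_subtractf right_diff_distrib)
    also have "\<dots> \<le> (\<Sum>r\<in>C. \<bar>p r * Q r s / p s * (ln (1 + mob_f (B r) 0 * z1) - ln (1 + mob_f (B r) 0 * z2))\<bar>)"
      by (rule sum_abs)
    also have "\<dots> \<le> (\<Sum>r\<in>C. p r * Q r s / p s * (d_hyp (mob_f (B r) 0) 0 * qz z1 z2))"
    proof (rule sum_mono)
      fix r assume r: "r \<in> C"
      have "\<bar>p r * Q r s / p s * (ln (1 + mob_f (B r) 0 * z1) - ln (1 + mob_f (B r) 0 * z2))\<bar>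
          = p r * Q r s / p s * \<bar>ln (1 + mob_f (B r) 0 * z1) - ln (1 + mob_f (B r) 0 * z2)\<bar>"
        by (simp only: abs_mult abs_of_nonneg[OF w0[OF r s]])
      also have "\<dots> \<le> p r * Q r s / p s * (d_hyp (mob_f (B r) 0) 0 * qz z1 z2)"
        using w0[OF r s] log_ineq[OF f01[OF r] z] by (rule mult_left_mono[rotated])
      finally show "\<bar>p r * Q r s / p s * (ln (1 + mob_f (B r) 0 * z1) - ln (1 + mob_f (B r) 0 * z2))\<bar>
          \<le> p r * Q r s / p s * (d_hyp (mob_f (B r) 0) 0 * qz z1 z2)" .
    qed
    also have "\<dots> = (\<Sum>r\<in>C. p r * Q r s / p s * d_hyp (mob_f (B r) 0) 0) * \<rho> ^ 0 * qz z1 z2"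
      by (simp add: sum_distrib_right mult.assoc)
    finally show "\<bar>(\<Sum>r\<in>C. p r * Q r s / p s * ln (1 + mob_f (B r) 0 * z1))
          - (\<Sum>r\<in>C. p r * Q r s / p s * ln (1 + mob_f (B r) 0 * z2))\<bar>
        \<le> (\<Sum>r\<in>C. p r * Q r s / p s * d_hyp (mob_f (B r) 0) 0) * \<rho> ^ 0 * qz z1 z2" .
  next
    show "(\<Sum>s\<in>C. p s * (\<Sum>r\<in>C. p r * Q r s / p s * d_hyp (mob_f (B r) 0) 0))
        = (\<Sum>r\<in>C. p r * d_hyp (mob_f (B r) 0) 0)"
      by (rule swap_sum[OF fin Qr pp])
  qed
next
  case (Suc k)
  from Suc.IH obtain \<Phi> W where IH: "\<forall>s\<in>C. good \<rho> ((TT C Q p B ^^ k) (seed C Q p B) s) (\<Phi> s) \<and> W s \<ge> 0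
            \<and> (\<forall>z1 z2. \<bar>z1\<bar> < 1 \<longrightarrow> \<bar>z2\<bar> < 1 \<longrightarrow> \<bar>\<Phi> s z1 - \<Phi> s z2\<bar> \<le> W s * \<rho> ^ k * qz z1 z2)"
     and Ws: "(\<Sum>s\<in>C. p s * W s) = (\<Sum>r\<in>C. p r * d_hyp (mob_f (B r) 0) 0)" by blast
  let ?U = "(TT C Q p B ^^ k) (seed C Q p B)"
  have gU: "\<forall>r\<in>C. good \<rho> (?U r) (\<Phi> r)" using IH by blast
  obtain \<Phi>' where S: "\<forall>s\<in>C. good \<rho> (TT C Q p B ?U s) (\<Phi>' s)
     \<and> (\<forall>z. \<bar>z\<bar> < 1 \<longrightarrow> \<Phi>' s z = (\<Sum>r\<in>C. p r * Q r s / p s * (\<Phi> r (mob_fT (B r) z) - \<Phi> r (mob_fT (B r) 0))))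
     \<and> TT C Q p B ?U s 0 = (\<Sum>r\<in>C. p r * Q r s / p s * \<Phi> r (mob_fT (B r) 0))"
    using TT_step[OF fin Bp r1 fb gU] by blast
  have w0: "p r * Q r s / p s \<ge> 0" if "r \<in> C" "s \<in> C" for r s
  proof -
    have "p r > 0" "Q r s \<ge> 0" "p s > 0" using pp Qn that by auto
    thus ?thesis by simp
  qed
  have tt: "(TT C Q p B ^^ Suc k) (seed C Q p B) = TT C Q p B ?U" by simp
  show ?case
  proof (rule exI[of _ \<Phi>'], rule exI[of _ "\<lambda>s. \<Sum>r\<in>C. p r * Q r s / p s * W r"], intro conjI ballI allI impI)
    fix s assume s: "s \<in> C"
    show "good \<rho> ((TT C Q p B ^^ Suc k) (seed C Q p B) s) (\<Phi>' s)" unfolding tt using S s by blast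
    show "(\<Sum>r\<in>C. p r * Q r s / p s * W r) \<ge> 0"
      using w0 IH s by (intro sum_nonneg mult_nonneg_nonneg) auto
    fix z1 z2 :: real assume z: "\<bar>z1\<bar> < 1" "\<bar>z2\<bar> < 1"
    have fz: "\<bar>mob_fT (B r) z1\<bar> < 1" "\<bar>mob_fT (B r) z2\<bar> < 1" if "r \<in> C" for r
      using fT_bound[of "B r" z1] fT_bound[of "B r" z2] Bp that z by auto
    have eqd: "\<Phi>' s z1 - \<Phi>' s z2 = (\<Sum>r\<in>C. p r * Q r s / p s * (\<Phi> r (mob_fT (B r) z1) - \<Phi> r (mob_fT (B r) z2)))"
      using S s z by (simp add: sum_subtractf[symmetric] right_diff_distrib)
    have "\<bar>\<Phi>' s z1 - \<Phi>' s z2\<bar> \<le> (\<Sum>r\<in>C. \<bar>p r * Q r s / p s * (\<Phi> r (mob_fT (B r) z1) - \<Phi> r (mob_fT (B r) z2))\<bar>)"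
      unfolding eqd by (rule sum_abs)
    also have "\<dots> \<le> (\<Sum>r\<in>C. p r * Q r s / p s * (W r * \<rho> ^ Suc k * qz z1 z2))"
    proof (rule sum_mono)
      fix r assume r: "r \<in> C"
      have "\<bar>\<Phi> r (mob_fT (B r) z1) - \<Phi> r (mob_fT (B r) z2)\<bar> \<le> W r * \<rho> ^ k * qz (mob_fT (B r) z1) (mob_fT (B r) z2)"
        using IH r fz[OF r] by blast
      also have "\<dots> \<le> W r * \<rho> ^ k * (\<rho> * qz z1 z2)"
      proof (rule mult_left_mono)
        show "qz (mob_fT (B r) z1) (mob_fT (B r) z2) \<le> \<rho> * qz z1 z2"
          using qz_contr[of "B r" \<rho> z1 z2] Bp fb r r1 z by auto
        show "0 \<le> W r * \<rho> ^ k" using IH r r0 by auto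
      qed
      also have "\<dots> = W r * \<rho> ^ Suc k * qz z1 z2" by (simp add: mult_ac)
      finally have "\<bar>\<Phi> r (mob_fT (B r) z1) - \<Phi> r (mob_fT (B r) z2)\<bar> \<le> W r * \<rho> ^ Suc k * qz z1 z2" .
      hence "p r * Q r s / p s * \<bar>\<Phi> r (mob_fT (B r) z1) - \<Phi> r (mob_fT (B r) z2)\<bar>
           \<le> p r * Q r s / p s * (W r * \<rho> ^ Suc k * qz z1 z2)"
        using w0[OF r s] by (rule mult_left_mono)
      thus "\<bar>p r * Q r s / p s * (\<Phi> r (mob_fT (B r) z1) - \<Phi> r (mob_fT (B r) z2))\<bar>
           \<le> p r * Q r s / p s * (W r * \<rho> ^ Suc k * qz z1 z2)"
        by (simp only: abs_mult abs_of_nonneg[OF w0[OF r s]])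
    qed
    also have "\<dots> = (\<Sum>r\<in>C. p r * Q r s / p s * W r) * \<rho> ^ Suc k * qz z1 z2"
      by (simp add: sum_distrib_right mult.assoc)
    finally show "\<bar>\<Phi>' s z1 - \<Phi>' s z2\<bar> \<le> (\<Sum>r\<in>C. p r * Q r s / p s * W r) * \<rho> ^ Suc k * qz z1 z2" .
  next
    show "(\<Sum>s\<in>C. p s * (\<Sum>r\<in>C. p r * Q r s / p s * W r)) = (\<Sum>r\<in>C. p r * d_hyp (mob_f (B r) 0) 0)"
      using swap_sum[OF fin Qr pp, of W] Ws by simp
  qed
qed



lemma bracket_bound:
  fixes C :: "'r set" and Q :: "'r \<Rightarrow> 'r \<Rightarrow> real" and p :: "'r \<Rightarrow> real" and B :: "'r \<Rightarrow> real^2^2"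
  assumes fin: "finite C" and Bp: "\<forall>r\<in>C. ppos (B r)" and r0: "0 < \<rho>" and r1: "\<rho> < 1"
    and fb: "\<forall>r\<in>C. \<forall>x. -1 \<le> x \<and> x \<le> 1 \<longrightarrow> \<bar>mob_f (B r) x\<bar> \<le> \<rho>"
    and Qn: "\<forall>r\<in>C. \<forall>r'\<in>C. Q r r' \<ge> 0" and Qr: "\<forall>r\<in>C. (\<Sum>r'\<in>C. Q r r') = 1"
    and pp: "\<forall>r\<in>C. p r > 0"
  shows "\<bar>bracket0 C p ((TT C Q p B ^^ Suc k) (seed C Q p B))\<bar>
    \<le> Max ((\<lambda>r. \<bar>mob_fT (B r) 0\<bar> / (1 + sqrt (1 - \<bar>mob_fT (B r) 0\<bar>^2))) ` C)
       * (\<Sum>r\<in>C. p r * d_hyp (mob_f (B r) 0) 0) * \<rho> ^ k"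
proof -
  let ?M = "Max ((\<lambda>r. \<bar>mob_fT (B r) 0\<bar> / (1 + sqrt (1 - \<bar>mob_fT (B r) 0\<bar>^2))) ` C)"
  let ?D = "\<Sum>r\<in>C. p r * d_hyp (mob_f (B r) 0) 0"
  obtain \<Phi> W where IH: "\<forall>s\<in>C. good \<rho> ((TT C Q p B ^^ k) (seed C Q p B) s) (\<Phi> s) \<and> W s \<ge> 0
            \<and> (\<forall>z1 z2. \<bar>z1\<bar> < 1 \<longrightarrow> \<bar>z2\<bar> < 1 \<longrightarrow> \<bar>\<Phi> s z1 - \<Phi> s z2\<bar> \<le> W s * \<rho> ^ k * qz z1 z2)"
     and Ws: "(\<Sum>s\<in>C. p s * W s) = ?D"
    using inv_step[OF fin Bp r0 r1 fb Qn Qr pp, of k] by blast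
  let ?U = "(TT C Q p B ^^ k) (seed C Q p B)"
  have gU: "\<forall>r\<in>C. good \<rho> (?U r) (\<Phi> r)" using IH by blast
  obtain \<Phi>' where S: "\<forall>s\<in>C. TT C Q p B ?U s 0 = (\<Sum>r\<in>C. p r * Q r s / p s * \<Phi> r (mob_fT (B r) 0))"
    using TT_step[OF fin Bp r1 fb gU] by blast
  have tt: "(TT C Q p B ^^ Suc k) (seed C Q p B) = TT C Q p B ?U" by simp
  have "bracket0 C p ((TT C Q p B ^^ Suc k) (seed C Q p B))
      = (\<Sum>s\<in>C. p s * (\<Sum>r\<in>C. p r * Q r s / p s * \<Phi> r (mob_fT (B r) 0)))"
    unfolding tt bracket0_def using S by (intro sum.cong) auto
  also have "\<dots> = (\<Sum>r\<in>C. p r * \<Phi> r (mob_fT (B r) 0))" by (rule swap_sum[OF fin Qr pp])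
  finally have br: "bracket0 C p ((TT C Q p B ^^ Suc k) (seed C Q p B)) = (\<Sum>r\<in>C. p r * \<Phi> r (mob_fT (B r) 0))" .
  have "\<bar>\<Sum>r\<in>C. p r * \<Phi> r (mob_fT (B r) 0)\<bar> \<le> (\<Sum>r\<in>C. \<bar>p r * \<Phi> r (mob_fT (B r) 0)\<bar>)"
    by (rule sum_abs)
  also have "\<dots> \<le> (\<Sum>r\<in>C. p r * W r * (\<rho> ^ k * ?M))"
  proof (rule sum_mono)
    fix r assume r: "r \<in> C"
    have a1: "\<bar>mob_fT (B r) 0\<bar> < 1" using fT_bound[of "B r" 0] Bp r by simp
    have P0: "\<Phi> r 0 = 0" using IH r good_Phi0 by blast
    have "\<bar>\<Phi> r (mob_fT (B r) 0)\<bar> = \<bar>\<Phi> r (mob_fT (B r) 0) - \<Phi> r 0\<bar>" using P0 by simp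
    also have "\<dots> \<le> W r * \<rho> ^ k * qz (mob_fT (B r) 0) 0" using IH r a1 by simp
    also have "\<dots> \<le> W r * \<rho> ^ k * ?M"
    proof (rule mult_left_mono)
      have "qz (mob_fT (B r) 0) 0 = \<bar>mob_fT (B r) 0\<bar> / (1 + sqrt (1 - \<bar>mob_fT (B r) 0\<bar>^2))"
        using qz_at0[OF a1] by simp
      also have "\<dots> \<le> ?M" using fin r by (intro Max_ge) auto
      finally show "qz (mob_fT (B r) 0) 0 \<le> ?M" .
      show "0 \<le> W r * \<rho> ^ k" using IH r r0 by auto
    qed
    finally have "\<bar>\<Phi> r (mob_fT (B r) 0)\<bar> \<le> W r * \<rho> ^ k * ?M" .
    hence "p r * \<bar>\<Phi> r (mob_fT (B r) 0)\<bar> \<le> p r * (W r * \<rho> ^ k * ?M)"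
      using pp r by (intro mult_left_mono) auto
    thus "\<bar>p r * \<Phi> r (mob_fT (B r) 0)\<bar> \<le> p r * W r * (\<rho> ^ k * ?M)"
    proof -
      have prp: "p r > 0" using pp r by auto
      show ?thesis using prp \<open>p r * \<bar>\<Phi> r (mob_fT (B r) 0)\<bar> \<le> p r * (W r * \<rho> ^ k * ?M)\<close>
        by (simp add: abs_mult abs_of_pos[OF prp] mult_ac)
    qed
  qed
  also have "\<dots> = (\<Sum>r\<in>C. p r * W r) * (\<rho> ^ k * ?M)" by (rule sum_distrib_right[symmetric])
  also have "\<dots> = ?M * ?D * \<rho> ^ k" unfolding Ws by (simp only: mult_ac)
  finally show ?thesis unfolding br .
qed

theorem proposition4p1:
  fixes C :: "'r set" and Q :: "'r \<Rightarrow> 'r \<Rightarrow> real" and p :: "'r \<Rightarrow> real"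
    and B :: "'r \<Rightarrow> real^2^2" and \<rho> :: real and n :: nat
  assumes "finite C" and "C \<noteq> {}"
    and "\<forall>r\<in>C. \<forall>r'\<in>C. Q r r' \<ge> 0"
    and "\<forall>r\<in>C. (\<Sum>r'\<in>C. Q r r') = 1"
    and "irreducible_on C Q" and "aperiodic_on C Q"
    and "\<forall>r\<in>C. p r > 0" and "(\<Sum>r\<in>C. p r) = 1"
    and "\<forall>r'\<in>C. (\<Sum>r\<in>C. p r * Q r r') = p r'"
    and "\<forall>r\<in>C. \<forall>i j. B r $ i $ j > 0"
    and "\<forall>r\<in>C. det (B r) \<noteq> 0"
    and "0 < \<rho>" and "\<rho> < 1"
    and "\<forall>r\<in>C. \<forall>x. -1 \<le> x \<and> x \<le> 1 \<longrightarrow> \<bar>mob_f (B r) x\<bar> \<le> \<rho>"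
    and "n \<ge> 1"
  shows "summable (\<lambda>k. bracket0 C p ((TT C Q p B ^^ k) (seed C Q p B)))
     \<and> \<bar>(\<Sum>k. bracket0 C p ((TT C Q p B ^^ k) (seed C Q p B)))
          - (\<Sum>k<n. bracket0 C p ((TT C Q p B ^^ k) (seed C Q p B)))\<bar>
        \<le> E_C C p B \<rho> * \<rho> ^ (n - 1)"
proof -
  note fin = assms(1) and Cne = assms(2) and Qn = assms(3) and Qr = assms(4) and pp = assms(7)
    and r0 = assms(12) and r1 = assms(13) and fb = assms(14) and n1 = assms(15)
  have Bp: "\<forall>r\<in>C. ppos (B r)" using assms(10) unfolding ppos_def by blast
  define b where "b k = bracket0 C p ((TT C Q p B ^^ k) (seed C Q p B))" for k
  define M where "M = Max ((\<lambda>r. \<bar>mob_fT (B r) 0\<bar> / (1 + sqrt (1 - \<bar>mob_fT (B r) 0\<bar>^2))) ` C)"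
  define D where "D = (\<Sum>r\<in>C. p r * d_hyp (mob_f (B r) 0) 0)"
  define K where "K = M * D"
  have M0: "M \<ge> 0"
  proof -
    obtain r where r: "r \<in> C" using Cne by blast
    have a1: "\<bar>mob_fT (B r) 0\<bar> < 1" using fT_bound[of "B r" 0] Bp r by simp
    hence "\<bar>mob_fT (B r) 0\<bar>^2 \<le> 1" by (intro power_le_one) auto
    hence s0: "sqrt (1 - \<bar>mob_fT (B r) 0\<bar>^2) \<ge> 0" by simp
    have "0 \<le> \<bar>mob_fT (B r) 0\<bar> / (1 + sqrt (1 - \<bar>mob_fT (B r) 0\<bar>^2))"
      by (rule divide_nonneg_pos[OF abs_ge_zero]) (use s0 in linarith)
    also have "\<dots> \<le> M" unfolding M_def using fin r by (intro Max_ge) auto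
    finally show ?thesis .
  qed
  have D0: "D \<ge> 0" unfolding D_def d_hyp_def using pp by (intro sum_nonneg) (auto intro: mult_nonneg_nonneg less_imp_le)
  have K0: "K \<ge> 0" unfolding K_def using M0 D0 by simp
  have hb: "\<bar>b (Suc k)\<bar> \<le> K * \<rho> ^ k" for k
    unfolding b_def K_def M_def D_def by (rule bracket_bound[OF fin Bp r0 r1 fb Qn Qr pp])
  have gs: "(\<lambda>j. c * \<rho> ^ j) sums (c * (1 / (1 - \<rho>)))" for c
    using r0 r1 by (intro sums_mult geometric_sums) simp
  have "summable (\<lambda>k. b (Suc k))"
    by (rule summable_comparison_test'[OF sums_summable[OF gs[of K]], of 0]) (use hb in simp)
  hence sb: "summable b" by (simp only: summable_Suc_iff)
  obtain m where m: "n = Suc m" using n1 by (cases n) auto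
  have hb': "\<bar>b (j + n)\<bar> \<le> (K * \<rho> ^ m) * \<rho> ^ j" for j
  proof -
    have "b (j + n) = b (Suc (j + m))" unfolding m by simp
    hence "\<bar>b (j + n)\<bar> \<le> K * \<rho> ^ (j + m)" using hb by simp
    thus ?thesis by (simp add: power_add mult_ac)
  qed
  have sa: "summable (\<lambda>j. \<bar>b (j + n)\<bar>)"
    by (rule summable_rabs_comparison_test[OF _ sums_summable[OF gs[of "K * \<rho> ^ m"]]]) (use hb' in blast)
  have "(\<Sum>k. b k) - (\<Sum>k<n. b k) = (\<Sum>j. b (j + n))"
    by (rule suminf_minus_initial_segment[OF sb, symmetric])
  hence "\<bar>(\<Sum>k. b k) - (\<Sum>k<n. b k)\<bar> \<le> (\<Sum>j. \<bar>b (j + n)\<bar>)"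
    using summable_rabs[OF sa] by simp
  also have "\<dots> \<le> (\<Sum>j. (K * \<rho> ^ m) * \<rho> ^ j)"
    by (rule suminf_le[OF hb' sa sums_summable[OF gs]])
  also have "\<dots> = (K * \<rho> ^ m) * (1 / (1 - \<rho>))" by (rule sums_unique[OF gs, symmetric])
  also have "\<dots> = E_C C p B \<rho> * \<rho> ^ (n - 1)"
    unfolding E_C_def K_def M_def D_def m by simp
  finally have "\<bar>(\<Sum>k. b k) - (\<Sum>k<n. b k)\<bar> \<le> E_C C p B \<rho> * \<rho> ^ (n - 1)" .
  with sb show ?thesis unfolding b_def by blast
qed


end
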